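(* For each compact metric space $G\in\mathcal{M}$ and each real $r>\operatorname{diam}G$, the sphere $\{Y\in\mathcal{M}: d_{GH}(G,Y)=r\}$ in $\mathcal{M}$ is path connected (as a subspace of the metric space $(\mathcal{M},d_{GH})$).
   Context: $\mathcal{M}$ denotes the set of isometry classes of compact metric spaces endowed with the Gromov–Hausdorff distance $d_{GH}$ (a metric on $\mathcal{M}$): $d_{GH}(X,Y)$ is the infimum of $r$ such that there exist a metric space $Z$ and subsets $X',Y'\subset Z$ isometric to $X,Y$ with Hausdorff distance $d_H(X',Y')\le r$. *)

theory Defs
  imports "HOL-Analysis.Analysis"
begin

text \<open>Every compact metric space has cardinality at most the continuum, so up to
isometry it can be realised with carrier a subset of the reals (with an arbitrary
metric).\<close>

definition compact_ms :: "'a metric \<Rightarrow> bool" where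
  "compact_ms m \<longleftrightarrow> mspace m \<noteq> {} \<and> compact_space (mtopology_of m)"

definition isometric_embedding :: "'a metric \<Rightarrow> 'b metric \<Rightarrow> ('a \<Rightarrow> 'b) \<Rightarrow> bool" where
  "isometric_embedding X Z f \<longleftrightarrow> f ` mspace X \<subseteq> mspace Z \<and>
     (\<forall>x\<in>mspace X. \<forall>y\<in>mspace X. mdist Z (f x) (f y) = mdist X x y)"

definition isometric_ms :: "'a metric \<Rightarrow> 'b metric \<Rightarrow> bool" where
  "isometric_ms X Y \<longleftrightarrow> (\<exists>f. isometric_embedding X Y f \<and> f ` mspace X = mspace Y)"

definition mdiam :: "'a metric \<Rightarrow> real" where
  "mdiam m = Sup {mdist m x y | x y. x \<in> mspace m \<and> y \<in> mspace m}"

definition hausdorff_dist :: "'a metric \<Rightarrow> 'a set \<Rightarrow> 'a set \<Rightarrow> real" where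
  "hausdorff_dist Z A B =
     max (SUP a\<in>A. INF b\<in>B. mdist Z a b) (SUP b\<in>B. INF a\<in>A. mdist Z a b)"

text \<open>The ambient
space Z ranges over metric spaces with carrier in the reals, which loses nothing
since one may always pass to the union of the two copies (cardinality at most the
continuum).\<close>
definition dGH :: "'a metric \<Rightarrow> 'b metric \<Rightarrow> real" where
  "dGH X Y = Inf {r. \<exists>(Z::real metric) f g. isometric_embedding X Z f \<and> isometric_embedding Y Z g
                       \<and> hausdorff_dist Z (f ` mspace X) (g ` mspace Y) \<le> r}"

definition iso_class :: "real metric \<Rightarrow> real metric set" where
  "iso_class m = {m'. isometric_ms m m'}"

definition GH_space :: "real metric set set" where
  "GH_space = {iso_class m | m. compact_ms m}"

definition rep :: "real metric set \<Rightarrow> real metric" where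
  "rep A = (SOME m. m \<in> A)"

definition dGH_M :: "real metric set \<Rightarrow> real metric set \<Rightarrow> real" where
  "dGH_M A B = dGH (rep A) (rep B)"

definition diam_M :: "real metric set \<Rightarrow> real" where
  "diam_M A = mdiam (rep A)"

definition dist_topology :: "'a set \<Rightarrow> ('a \<Rightarrow> 'a \<Rightarrow> real) \<Rightarrow> 'a topology" where
  "dist_topology S d = topology (\<lambda>U. U \<subseteq> S \<and> (\<forall>x\<in>U. \<exists>e>0. \<forall>y\<in>S. d x y < e \<longrightarrow> y \<in> U))"

lemma istopology_dist_topology:
  fixes d :: "'a \<Rightarrow> 'a \<Rightarrow> real"
  shows "istopology (\<lambda>U. U \<subseteq> S \<and> (\<forall>x\<in>U. \<exists>e>0. \<forall>y\<in>S. d x y < e \<longrightarrow> y \<in> U))"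
  unfolding istopology_def
proof (intro conjI allI impI)
  fix U V
  assume hU: "U \<subseteq> S \<and> (\<forall>x\<in>U. \<exists>e>0. \<forall>y\<in>S. d x y < e \<longrightarrow> y \<in> U)"
     and hV: "V \<subseteq> S \<and> (\<forall>x\<in>V. \<exists>e>0. \<forall>y\<in>S. d x y < e \<longrightarrow> y \<in> V)"
  have "\<exists>e>0. \<forall>y\<in>S. d x y < e \<longrightarrow> y \<in> U \<inter> V" if x: "x \<in> U \<inter> V" for x
  proof -
    obtain e1 e2 where "e1 > 0" "\<forall>y\<in>S. d x y < e1 \<longrightarrow> y \<in> U"
      "e2 > 0" "\<forall>y\<in>S. d x y < e2 \<longrightarrow> y \<in> V"
      using hU hV x by blast
    then show ?thesis
      by (intro exI[of _ "min e1 e2"]) auto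
  qed
  then show "\<forall>x\<in>U \<inter> V. \<exists>e>0. \<forall>y\<in>S. d x y < e \<longrightarrow> y \<in> U \<inter> V"
    by blast
  show "U \<inter> V \<subseteq> S" using hU by blast
next
  fix K assume hK: "\<forall>U\<in>K. U \<subseteq> S \<and> (\<forall>x\<in>U. \<exists>e>0. \<forall>y\<in>S. d x y < e \<longrightarrow> y \<in> U)"
  then show "\<Union> K \<subseteq> S" by blast
  show "\<forall>x\<in>\<Union> K. \<exists>e>0. \<forall>y\<in>S. d x y < e \<longrightarrow> y \<in> \<Union> K"
  proof
    fix x assume "x \<in> \<Union> K"
    then obtain U where "U \<in> K" "x \<in> U" by blast
    with hK obtain e where "e > 0" "\<forall>y\<in>S. d x y < e \<longrightarrow> y \<in> U" by blast
    with \<open>U \<in> K\<close> show "\<exists>e>0. \<forall>y\<in>S. d x y < e \<longrightarrow> y \<in> \<Union> K" by blast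
  qed
qed

definition GH_topology :: "real metric set topology" where
  "GH_topology = dist_topology GH_space dGH_M"

end

theory Submission
  imports Defs
begin



definition bnd :: "'a metric \<Rightarrow> real \<Rightarrow> bool" where
  "bnd X B \<longleftrightarrow> (\<forall>x\<in>mspace X. \<forall>y\<in>mspace X. mdist X x y \<le> B)"

definition cms :: "'a metric \<Rightarrow> bool" where
  "cms X \<longleftrightarrow> mspace X \<noteq> {} \<and> (\<exists>B. bnd X B)"

lemma compact_bnd:
  assumes "compact_space (mtopology_of X)"
  shows "\<exists>B. bnd X B"
proof -
  interpret Metric_space "mspace X" "mdist X" by simp
  have "compactin mtopology (mspace X)"
    using assms by (simp add: compact_space_def mtopology_of_def)
  then have "mbounded (mspace X)" by (rule compactin_imp_mbounded)
  then obtain c B where cB: "mspace X \<subseteq> mcball c B" by (auto simp: mbounded_def)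
  have "mdist X x y \<le> 2 * B" if "x \<in> mspace X" "y \<in> mspace X" for x y
  proof -
    have "mdist X c x \<le> B" "mdist X c y \<le> B" "c \<in> mspace X"
      using cB that by auto
    moreover have "mdist X x y \<le> mdist X x c + mdist X c y"
      using that \<open>c \<in> mspace X\<close> by (simp add: triangle)
    ultimately show ?thesis by (simp add: commute)
  qed
  then show ?thesis unfolding bnd_def by blast
qed

lemma compact_ms_cms: "compact_ms X \<Longrightarrow> cms X"
  unfolding compact_ms_def cms_def using compact_bnd by blast

lemma bnd_nonneg: "bnd X B \<Longrightarrow> mspace X \<noteq> {} \<Longrightarrow> 0 \<le> B"
  unfolding bnd_def by (metis all_not_in_conv mdist_nonneg order.trans)

lemma mdiam_ge:
  assumes "bnd X B" "x \<in> mspace X" "y \<in> mspace X"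
  shows "mdist X x y \<le> mdiam X"
  unfolding mdiam_def
  by (rule cSup_upper) (use assms in \<open>auto simp: bnd_def bdd_above_def\<close>)

lemma mdiam_bnd: "cms X \<Longrightarrow> bnd X (mdiam X)"
proof -
  assume "cms X"
  then obtain B where "bnd X B" unfolding cms_def by blast
  then show ?thesis unfolding bnd_def using mdiam_ge[OF \<open>bnd X B\<close>] by simp
qed

section \<open>Correspondences\<close>

definition corr :: "'a metric \<Rightarrow> 'b metric \<Rightarrow> ('a \<times> 'b) set \<Rightarrow> bool" where
  "corr X Y R \<longleftrightarrow> R \<subseteq> mspace X \<times> mspace Y \<and> (\<forall>x\<in>mspace X. \<exists>y. (x,y)\<in>R) \<and> (\<forall>y\<in>mspace Y. \<exists>x. (x,y)\<in>R)"

definition dis :: "'a metric \<Rightarrow> 'b metric \<Rightarrow> ('a \<times> 'b) set \<Rightarrow> real" where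
  "dis X Y R = Sup {\<bar>mdist X (fst p) (fst q) - mdist Y (snd p) (snd q)\<bar> | p q. p \<in> R \<and> q \<in> R}"

definition DD :: "'a metric \<Rightarrow> 'b metric \<Rightarrow> real" where
  "DD X Y = Inf {dis X Y R | R. corr X Y R}"

lemma corr_nonempty: "corr X Y R \<Longrightarrow> mspace X \<noteq> {} \<Longrightarrow> R \<noteq> {}"
  unfolding corr_def by blast

lemma corr_full: "corr X Y (mspace X \<times> mspace Y) \<longleftrightarrow> (mspace X = {} \<longleftrightarrow> mspace Y = {})"
  unfolding corr_def by auto

lemma dis_ge:
  assumes "bnd X A" "bnd Y B" "corr X Y R" "p \<in> R" "q \<in> R"
  shows "\<bar>mdist X (fst p) (fst q) - mdist Y (snd p) (snd q)\<bar> \<le> dis X Y R"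
  unfolding dis_def
proof (rule cSup_upper)
  show "bdd_above {\<bar>mdist X (fst p) (fst q) - mdist Y (snd p) (snd q)\<bar> | p q. p \<in> R \<and> q \<in> R}"
  proof (rule bdd_aboveI)
    fix z assume "z \<in> {\<bar>mdist X (fst p) (fst q) - mdist Y (snd p) (snd q)\<bar> | p q. p \<in> R \<and> q \<in> R}"
    then obtain p q where z: "z = \<bar>mdist X (fst p) (fst q) - mdist Y (snd p) (snd q)\<bar>" "p\<in>R" "q\<in>R" by blast
    then have "fst p \<in> mspace X" "fst q \<in> mspace X" "snd p \<in> mspace Y" "snd q \<in> mspace Y"
      using assms(3) unfolding corr_def by auto
    then have "mdist X (fst p) (fst q) \<le> A" "mdist Y (snd p) (snd q) \<le> B"
      using assms(1,2) unfolding bnd_def by auto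
    then show "z \<le> A + B" using z(1) by (simp add: abs_le_iff) (smt (verit) mdist_nonneg)
  qed
qed (use assms in blast)

lemma dis_le:
  assumes "R \<noteq> {}" "\<And>p q. p \<in> R \<Longrightarrow> q \<in> R \<Longrightarrow> \<bar>mdist X (fst p) (fst q) - mdist Y (snd p) (snd q)\<bar> \<le> c"
  shows "dis X Y R \<le> c"
  unfolding dis_def
proof (rule cSup_least)
  obtain p where "p \<in> R" using assms by blast
  then show "{\<bar>mdist X (fst p) (fst q) - mdist Y (snd p) (snd q)\<bar> | p q. p \<in> R \<and> q \<in> R} \<noteq> {}" by blast
next
  fix z assume "z \<in> {\<bar>mdist X (fst p) (fst q) - mdist Y (snd p) (snd q)\<bar> | p q. p \<in> R \<and> q \<in> R}"
  then obtain p q where "z = \<bar>mdist X (fst p) (fst q) - mdist Y (snd p) (snd q)\<bar>" "p \<in> R" "q \<in> R" by blast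
  then show "z \<le> c" using assms(2) by simp
qed

lemma dis_nonneg:
  assumes "bnd X A" "bnd Y B" "corr X Y R" "R \<noteq> {}"
  shows "0 \<le> dis X Y R"
proof -
  obtain p where "p \<in> R" using assms by blast
  from dis_ge[OF assms(1-3) this this] show ?thesis by simp
qed

lemma DD_le:
  assumes "cms X" "cms Y" "corr X Y R"
  shows "DD X Y \<le> dis X Y R"
  unfolding DD_def
proof (rule cInf_lower)
  obtain A B where "bnd X A" "bnd Y B" using assms unfolding cms_def by blast
  have "mspace X \<noteq> {}" using assms unfolding cms_def by blast
  have "0 \<le> z" if zz: "z \<in> {dis X Y R | R. corr X Y R}" for z
  proof -
    obtain R' where "z = dis X Y R'" "corr X Y R'" using zz by blast
    then show ?thesis using dis_nonneg[OF \<open>bnd X A\<close> \<open>bnd Y B\<close>] corr_nonempty \<open>mspace X \<noteq> {}\<close> by metis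
  qed
  then show "bdd_below {dis X Y R | R. corr X Y R}" by (rule bdd_belowI)
qed (use assms in blast)

lemma DD_nonneg:
  assumes "cms X" "cms Y"
  shows "0 \<le> DD X Y"
  unfolding DD_def
proof (rule cInf_greatest)
  show "{dis X Y R | R. corr X Y R} \<noteq> {}"
    using assms corr_full[of X Y] unfolding cms_def by blast
  obtain A B where "bnd X A" "bnd Y B" using assms unfolding cms_def by blast
  have "mspace X \<noteq> {}" using assms unfolding cms_def by blast
  show "0 \<le> z" if zz: "z \<in> {dis X Y R | R. corr X Y R}" for z
  proof -
    obtain R' where "z = dis X Y R'" "corr X Y R'" using zz by blast
    then show ?thesis using dis_nonneg[OF \<open>bnd X A\<close> \<open>bnd Y B\<close>] corr_nonempty \<open>mspace X \<noteq> {}\<close> by metis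
  qed
qed

lemma DD_ge:
  assumes "cms X" "cms Y" "\<And>R. corr X Y R \<Longrightarrow> c \<le> dis X Y R"
  shows "c \<le> DD X Y"
  unfolding DD_def
proof (rule cInf_greatest)
  show "{dis X Y R | R. corr X Y R} \<noteq> {}"
    using assms corr_full[of X Y] unfolding cms_def by blast
qed (use assms in auto)

lemma DD_approx:
  assumes "cms X" "cms Y" "e > 0"
  obtains R where "corr X Y R" "dis X Y R < DD X Y + e"
proof -
  have ne: "{dis X Y R | R. corr X Y R} \<noteq> {}"
    using assms corr_full[of X Y] unfolding cms_def by blast
  have "Inf {dis X Y R | R. corr X Y R} < DD X Y + e" using assms by (simp add: DD_def)
  then obtain z where "z \<in> {dis X Y R | R. corr X Y R}" "z < DD X Y + e"
    using cInf_lessD[OF ne] by blast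
  then show ?thesis using that by blast
qed

lemma DD_triangle:
  assumes X: "cms X" and Y: "cms Y" and Z: "cms Z"
  shows "DD X Z \<le> DD X Y + DD Y Z"
proof (rule field_le_epsilon)
  fix e :: real assume e: "e > 0"
  obtain R1 where R1: "corr X Y R1" "dis X Y R1 < DD X Y + e/2" using DD_approx[OF X Y, of "e/2"] e by auto
  obtain R2 where R2: "corr Y Z R2" "dis Y Z R2 < DD Y Z + e/2" using DD_approx[OF Y Z, of "e/2"] e by auto
  obtain A B C where b: "bnd X A" "bnd Y B" "bnd Z C" using X Y Z unfolding cms_def by blast
  define R where "R = R1 O R2"
  have cR: "corr X Z R"
    unfolding corr_def
  proof (intro conjI ballI subsetI)
    fix p assume "p \<in> R"
    then obtain y where "(fst p, y) \<in> R1" "(y, snd p) \<in> R2" unfolding R_def by auto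
    then show "p \<in> mspace X \<times> mspace Z" using R1(1) R2(1) unfolding corr_def by (auto simp: mem_Times_iff)
  next
    fix x assume "x \<in> mspace X"
    then obtain y where y: "(x,y) \<in> R1" using R1(1) unfolding corr_def by blast
    then have "y \<in> mspace Y" using R1(1) unfolding corr_def by blast
    then obtain z where "(y,z) \<in> R2" using R2(1) unfolding corr_def by blast
    then show "\<exists>z. (x,z) \<in> R" using y unfolding R_def by blast
  next
    fix z assume "z \<in> mspace Z"
    then obtain y where y: "(y,z) \<in> R2" using R2(1) unfolding corr_def by blast
    then have "y \<in> mspace Y" using R2(1) unfolding corr_def by blast
    then obtain x where "(x,y) \<in> R1" using R1(1) unfolding corr_def by blast
    then show "\<exists>x. (x,z) \<in> R" using y unfolding R_def by blast
  qed
  have "dis X Z R \<le> dis X Y R1 + dis Y Z R2"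
  proof (rule dis_le)
    show "R \<noteq> {}" using cR X corr_nonempty unfolding cms_def by blast
    fix p q assume "p \<in> R" "q \<in> R"
    then obtain y y' where p: "(fst p, y) \<in> R1" "(y, snd p) \<in> R2" and q: "(fst q, y') \<in> R1" "(y', snd q) \<in> R2"
      unfolding R_def by (auto simp: relcomp_unfold)
    have "\<bar>mdist X (fst p) (fst q) - mdist Y y y'\<bar> \<le> dis X Y R1"
      using dis_ge[OF b(1,2) R1(1) p(1) q(1)] by simp
    moreover have "\<bar>mdist Y y y' - mdist Z (snd p) (snd q)\<bar> \<le> dis Y Z R2"
      using dis_ge[OF b(2,3) R2(1) p(2) q(2)] by simp
    ultimately show "\<bar>mdist X (fst p) (fst q) - mdist Z (snd p) (snd q)\<bar> \<le> dis X Y R1 + dis Y Z R2"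
      by linarith
  qed
  then show "DD X Z \<le> DD X Y + DD Y Z + e"
    using DD_le[OF X Z cR] R1 R2 by linarith
qed

lemma corr_converse: "corr X Y R \<Longrightarrow> corr Y X (R\<inverse>)"
  unfolding corr_def by auto

lemma dis_converse:
  assumes "corr X Y R" "mspace X \<noteq> {}"
  shows "dis Y X (R\<inverse>) = dis X Y R"
proof -
  have "{\<bar>mdist Y (fst p) (fst q) - mdist X (snd p) (snd q)\<bar> | p q. p \<in> R\<inverse> \<and> q \<in> R\<inverse>}
      = {\<bar>mdist X (fst p) (fst q) - mdist Y (snd p) (snd q)\<bar> | p q. p \<in> R \<and> q \<in> R}"
  proof (intro equalityI subsetI)
    fix z assume "z \<in> {\<bar>mdist Y (fst p) (fst q) - mdist X (snd p) (snd q)\<bar> | p q. p \<in> R\<inverse> \<and> q \<in> R\<inverse>}"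
    then obtain p q where "z = \<bar>mdist Y (fst p) (fst q) - mdist X (snd p) (snd q)\<bar>" "p \<in> R\<inverse>" "q \<in> R\<inverse>" by blast
    then show "z \<in> {\<bar>mdist X (fst p) (fst q) - mdist Y (snd p) (snd q)\<bar> | p q. p \<in> R \<and> q \<in> R}"
      by (intro CollectI exI[of _ "prod.swap p"] exI[of _ "prod.swap q"]) (auto simp: abs_minus_commute)
  next
    fix z assume "z \<in> {\<bar>mdist X (fst p) (fst q) - mdist Y (snd p) (snd q)\<bar> | p q. p \<in> R \<and> q \<in> R}"
    then obtain p q where pq: "z = \<bar>mdist X (fst p) (fst q) - mdist Y (snd p) (snd q)\<bar>" "p \<in> R" "q \<in> R" by blast
    then have "z = \<bar>mdist Y (fst (prod.swap p)) (fst (prod.swap q)) - mdist X (snd (prod.swap p)) (snd (prod.swap q))\<bar>"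
      "prod.swap p \<in> R\<inverse>" "prod.swap q \<in> R\<inverse>"
      by (cases p; cases q; auto simp: abs_minus_commute)+
    then show "z \<in> {\<bar>mdist Y (fst p) (fst q) - mdist X (snd p) (snd q)\<bar> | p q. p \<in> R\<inverse> \<and> q \<in> R\<inverse>}"
      by (intro CollectI exI[of _ "prod.swap p"] exI[of _ "prod.swap q"]) simp
  qed
  then show ?thesis unfolding dis_def by simp
qed

lemma DD_sym_le:
  assumes "cms X" "cms Y"
  shows "DD Y X \<le> DD X Y"
proof (rule DD_ge[OF assms])
  fix R assume R: "corr X Y R"
  have "DD Y X \<le> dis Y X (R\<inverse>)"
    by (rule DD_le) (use assms corr_converse R in auto)
  also have "\<dots> = dis X Y R" using dis_converse R assms unfolding cms_def by blast
  finally show "DD Y X \<le> dis X Y R" .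
qed

lemma DD_sym: "cms X \<Longrightarrow> cms Y \<Longrightarrow> DD X Y = DD Y X"
  using DD_sym_le by (metis order_antisym)

lemma isometric_DD0:
  assumes "cms X" "cms X'" "isometric_ms X X'"
  shows "DD X X' = 0"
proof -
  obtain f where f: "isometric_embedding X X' f" "f ` mspace X = mspace X'"
    using assms unfolding isometric_ms_def by blast
  define R where "R = (\<lambda>x. (x, f x)) ` mspace X"
  have c: "corr X X' R" using f unfolding corr_def R_def isometric_embedding_def
    by (auto simp: image_iff)
  have "dis X X' R \<le> 0"
    by (rule dis_le) (use f assms in \<open>auto simp: R_def isometric_embedding_def cms_def\<close>)
  then show ?thesis using DD_le[OF assms(1,2) c] DD_nonneg[OF assms(1,2)] by linarith
qed

lemma DD_iso_left:
  assumes "cms X" "cms X'" "cms Y" "isometric_ms X X'"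
  shows "DD X Y = DD X' Y"
proof -
  have "DD X X' = 0" by (rule isometric_DD0) fact+
  moreover have "DD X' X = 0" using DD_sym assms \<open>DD X X' = 0\<close> by metis
  ultimately show ?thesis
    using DD_triangle[of X X' Y] DD_triangle[of X' X Y] assms by linarith
qed

lemma DD_iso_right:
  assumes "cms X" "cms Y" "cms Y'" "isometric_ms Y Y'"
  shows "DD X Y = DD X Y'"
  using DD_iso_left[of Y Y' X] DD_sym assms by metis




section \<open>Pushing a metric forward along an injection\<close>

definition push :: "('c \<Rightarrow> 'd) \<Rightarrow> 'c metric \<Rightarrow> 'd metric" where
  "push h W = metric (h ` mspace W, \<lambda>u v. mdist W (inv_into (mspace W) h u) (inv_into (mspace W) h v))"

lemma push_Metric_space:
  assumes "inj_on h (mspace W)"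
  shows "Metric_space (h ` mspace W) (\<lambda>u v. mdist W (inv_into (mspace W) h u) (inv_into (mspace W) h v))"
proof
  fix x y
  show "0 \<le> mdist W (inv_into (mspace W) h x) (inv_into (mspace W) h y)" by simp
  show "mdist W (inv_into (mspace W) h x) (inv_into (mspace W) h y) = mdist W (inv_into (mspace W) h y) (inv_into (mspace W) h x)"
    by (simp add: mdist_commute)
next
  fix x y assume xy: "x \<in> h ` mspace W" "y \<in> h ` mspace W"
  then obtain a b where ab: "a \<in> mspace W" "b \<in> mspace W" "x = h a" "y = h b" by blast
  then show "(mdist W (inv_into (mspace W) h x) (inv_into (mspace W) h y) = 0) = (x = y)"
    using assms by (auto simp: inv_into_f_f inj_on_eq_iff)
next
  fix x y z assume xyz: "x \<in> h ` mspace W" "y \<in> h ` mspace W" "z \<in> h ` mspace W"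
  then show "mdist W (inv_into (mspace W) h x) (inv_into (mspace W) h z)
        \<le> mdist W (inv_into (mspace W) h x) (inv_into (mspace W) h y) + mdist W (inv_into (mspace W) h y) (inv_into (mspace W) h z)"
    by (intro mdist_triangle) (auto intro: inv_into_into)
qed

lemma push_mspace: "inj_on h (mspace W) \<Longrightarrow> mspace (push h W) = h ` mspace W"
  unfolding push_def using Metric_space.mspace_metric[OF push_Metric_space] by blast

lemma push_mdist:
  assumes "inj_on h (mspace W)" "a \<in> mspace W" "b \<in> mspace W"
  shows "mdist (push h W) (h a) (h b) = mdist W a b"
  unfolding push_def using Metric_space.mdist_metric[OF push_Metric_space[OF assms(1)]] assms
  by (simp add: inv_into_f_f)

lemma push_isometric:
  assumes "inj_on h (mspace W)"
  shows "isometric_ms W (push h W)"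
  unfolding isometric_ms_def isometric_embedding_def
  using push_mspace[OF assms] push_mdist[OF assms] by blast

lemma compactin_lipschitz_image:
  assumes "compact_space (mtopology_of X)" "f ` mspace X \<subseteq> mspace W"
    "\<And>x y. x \<in> mspace X \<Longrightarrow> y \<in> mspace X \<Longrightarrow> mdist W (f x) (f y) \<le> C * mdist X x y"
  shows "compactin (mtopology_of W) (f ` mspace X)"
proof -
  have "Lipschitz_continuous_map X W f"
    unfolding Lipschitz_continuous_map_def using assms(2,3) by blast
  then have "continuous_map (mtopology_of X) (mtopology_of W) f"
    by (rule Lipschitz_continuous_imp_continuous_map)
  moreover have "compactin (mtopology_of X) (mspace X)"
    using assms(1) by (simp add: compact_space_def)
  ultimately show ?thesis by (metis image_compactin)
qed

lemma compact_space_ms: "compact_space (mtopology_of W) \<longleftrightarrow> compactin (mtopology_of W) (mspace W)"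
  by (simp add: compact_space_def)

lemma isometric_compact:
  assumes "compact_ms X" "isometric_ms X Y"
  shows "compact_ms Y"
proof -
  obtain f where f: "isometric_embedding X Y f" "f ` mspace X = mspace Y"
    using assms unfolding isometric_ms_def by blast
  have "compactin (mtopology_of Y) (f ` mspace X)"
  proof (rule compactin_lipschitz_image[of X _ _ 1])
    show "compact_space (mtopology_of X)" using assms unfolding compact_ms_def by blast
    show "f ` mspace X \<subseteq> mspace Y" using f by simp
    fix x y assume "x \<in> mspace X" "y \<in> mspace X"
    then show "mdist Y (f x) (f y) \<le> 1 * mdist X x y" using f unfolding isometric_embedding_def by simp
  qed
  moreover have "mspace Y \<noteq> {}" using f assms unfolding compact_ms_def by blast
  ultimately show ?thesis using f unfolding compact_ms_def compact_space_ms by simp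
qed

lemma isometric_refl: "isometric_ms X X"
  unfolding isometric_ms_def isometric_embedding_def by (intro exI[of _ id]) simp

lemma isometric_sym:
  assumes "isometric_ms X Y" shows "isometric_ms Y X"
proof -
  obtain f where f: "isometric_embedding X Y f" "f ` mspace X = mspace Y"
    using assms unfolding isometric_ms_def by blast
  have inj: "inj_on f (mspace X)"
  proof (rule inj_onI)
    fix x y assume "x \<in> mspace X" "y \<in> mspace X" "f x = f y"
    moreover have "f x \<in> mspace Y" using f \<open>x \<in> mspace X\<close> by blast
    ultimately have "mdist Y (f x) (f y) = 0" by simp
    moreover have "mdist Y (f x) (f y) = mdist X x y"
      using f \<open>x \<in> mspace X\<close> \<open>y \<in> mspace X\<close> unfolding isometric_embedding_def by blast
    ultimately have "mdist X x y = 0" by simp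
    then show "x = y" using \<open>x \<in> mspace X\<close> \<open>y \<in> mspace X\<close> by simp
  qed
  let ?g = "inv_into (mspace X) f"
  have "isometric_embedding Y X ?g \<and> ?g ` mspace Y = mspace X"
    unfolding isometric_embedding_def
  proof (intro conjI ballI)
    show "?g ` mspace Y \<subseteq> mspace X" using f by (auto intro: inv_into_into)
    show "?g ` mspace Y = mspace X" using inv_into_image_cancel[OF inj order_refl] f(2) by simp
    fix u v assume "u \<in> mspace Y" "v \<in> mspace Y"
    then obtain a b where "a \<in> mspace X" "b \<in> mspace X" "u = f a" "v = f b" using f by blast
    then show "mdist X (?g u) (?g v) = mdist Y u v"
      using f inj unfolding isometric_embedding_def by (simp add: inv_into_f_f)
  qed
  then show ?thesis unfolding isometric_ms_def by blast
qed

lemma isometric_trans: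
  assumes "isometric_ms X Y" "isometric_ms Y Z" shows "isometric_ms X Z"
proof -
  obtain f where f: "isometric_embedding X Y f" "f ` mspace X = mspace Y"
    using assms unfolding isometric_ms_def by blast
  obtain g where g: "isometric_embedding Y Z g" "g ` mspace Y = mspace Z"
    using assms unfolding isometric_ms_def by blast
  have "(g \<circ> f) ` mspace X = mspace Z"
    using f(2) g(2) image_comp[of g f "mspace X"] by simp
  moreover have "isometric_embedding X Z (g \<circ> f)"
    unfolding isometric_embedding_def
  proof (intro conjI ballI)
    show "(g \<circ> f) ` mspace X \<subseteq> mspace Z" using \<open>(g \<circ> f) ` mspace X = mspace Z\<close> by simp
    fix x y assume "x \<in> mspace X" "y \<in> mspace X"
    moreover have "f x \<in> mspace Y" "f y \<in> mspace Y" using f calculation by blast+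
    ultimately show "mdist Z ((g \<circ> f) x) ((g \<circ> f) y) = mdist X x y"
      using f g unfolding isometric_embedding_def by simp
  qed
  ultimately show ?thesis unfolding isometric_ms_def by blast
qed

lemma hausdorff_le:
  assumes "A \<noteq> {}" "B \<noteq> {}" "\<And>a. a \<in> A \<Longrightarrow> \<exists>b\<in>B. mdist Z a b \<le> r"
    "\<And>b. b \<in> B \<Longrightarrow> \<exists>a\<in>A. mdist Z a b \<le> r"
  shows "hausdorff_dist Z A B \<le> r"
proof -
  have "(SUP a\<in>A. INF b\<in>B. mdist Z a b) \<le> r"
  proof (rule cSUP_least[OF assms(1)])
    fix a assume "a \<in> A"
    then obtain b where "b \<in> B" "mdist Z a b \<le> r" using assms(3) by blast
    then show "(INF b\<in>B. mdist Z a b) \<le> r"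
      by (intro cINF_lower2[of _ _ b]) (auto intro: bdd_belowI[of _ 0])
  qed
  moreover have "(SUP b\<in>B. INF a\<in>A. mdist Z a b) \<le> r"
  proof (rule cSUP_least[OF assms(2)])
    fix b assume "b \<in> B"
    then obtain a where "a \<in> A" "mdist Z a b \<le> r" using assms(4) by blast
    then show "(INF a\<in>A. mdist Z a b) \<le> r"
      by (intro cINF_lower2[of _ _ a]) (auto intro: bdd_belowI[of _ 0])
  qed
  ultimately show ?thesis unfolding hausdorff_dist_def by simp
qed

lemma hausdorff_ge:
  assumes "hausdorff_dist Z A B \<le> r" "A \<noteq> {}" "B \<noteq> {}"
    "\<And>a b. a \<in> A \<Longrightarrow> b \<in> B \<Longrightarrow> mdist Z a b \<le> K" "e > 0"
  shows "\<And>a. a \<in> A \<Longrightarrow> \<exists>b\<in>B. mdist Z a b < r + e"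
    and "\<And>b. b \<in> B \<Longrightarrow> \<exists>a\<in>A. mdist Z a b < r + e"
proof -
  fix a assume a: "a \<in> A"
  obtain b0 where b0: "b0 \<in> B" using assms by blast
  have bb: "bdd_below ((\<lambda>b. mdist Z a b) ` B)" for a by (auto intro: bdd_belowI[of _ 0])
  have "(INF b\<in>B. mdist Z a b) \<le> (SUP a\<in>A. INF b\<in>B. mdist Z a b)"
  proof (rule cSUP_upper[OF a])
    show "bdd_above ((\<lambda>a. INF b\<in>B. mdist Z a b) ` A)"
    proof (rule bdd_aboveI)
      fix z assume "z \<in> (\<lambda>a. INF b\<in>B. mdist Z a b) ` A"
      then obtain a' where "a' \<in> A" "z = (INF b\<in>B. mdist Z a' b)" by blast
      then show "z \<le> K" using cINF_lower2[OF bb b0, of a' K] assms(4)[of a' b0] b0 by simp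
    qed
  qed
  also have "\<dots> \<le> r" using assms(1) unfolding hausdorff_dist_def by simp
  finally have "(INF b\<in>B. mdist Z a b) < r + e" using assms(5) by simp
  then show "\<exists>b\<in>B. mdist Z a b < r + e" using cINF_less_iff[OF assms(3) bb] by blast
next
  fix b assume b: "b \<in> B"
  obtain a0 where a0: "a0 \<in> A" using assms by blast
  have bb: "bdd_below ((\<lambda>a. mdist Z a b) ` A)" for b by (auto intro: bdd_belowI[of _ 0])
  have "(INF a\<in>A. mdist Z a b) \<le> (SUP b\<in>B. INF a\<in>A. mdist Z a b)"
  proof (rule cSUP_upper[OF b])
    show "bdd_above ((\<lambda>b. INF a\<in>A. mdist Z a b) ` B)"
    proof (rule bdd_aboveI)
      fix z assume "z \<in> (\<lambda>b. INF a\<in>A. mdist Z a b) ` B"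
      then obtain b' where "b' \<in> B" "z = (INF a\<in>A. mdist Z a b')" by blast
      then show "z \<le> K" using cINF_lower2[OF bb a0, of b' K] assms(4)[of a0 b'] a0 by simp
    qed
  qed
  also have "\<dots> \<le> r" using assms(1) unfolding hausdorff_dist_def by simp
  finally have "(INF a\<in>A. mdist Z a b) < r + e" using assms(5) by simp
  then show "\<exists>a\<in>A. mdist Z a b < r + e" using cINF_less_iff[OF assms(2) bb] by blast
qed




section \<open>Gluing along a correspondence\<close>

definition Phi :: "'a metric \<Rightarrow> 'b metric \<Rightarrow> ('a\<times>'b) set \<Rightarrow> 'a \<Rightarrow> 'b \<Rightarrow> real" where
  "Phi X Y R x y = Inf {mdist X x a + mdist Y b y | a b. (a,b) \<in> R}"

definition gd :: "'a metric \<Rightarrow> 'b metric \<Rightarrow> ('a\<times>'b) set \<Rightarrow> real \<Rightarrow> 'a+'b \<Rightarrow> 'a+'b \<Rightarrow> real" where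
  "gd X Y R \<rho> u v = (case u of Inl x \<Rightarrow> (case v of Inl x' \<Rightarrow> mdist X x x' | Inr y \<Rightarrow> \<rho> + Phi X Y R x y)
                        | Inr y \<Rightarrow> (case v of Inl x \<Rightarrow> \<rho> + Phi X Y R x y | Inr y' \<Rightarrow> mdist Y y y'))"

lemma gd_simps [simp]:
  "gd X Y R \<rho> (Inl x) (Inl x') = mdist X x x'"
  "gd X Y R \<rho> (Inr y) (Inr y') = mdist Y y y'"
  "gd X Y R \<rho> (Inl x) (Inr y) = \<rho> + Phi X Y R x y"
  "gd X Y R \<rho> (Inr y) (Inl x) = \<rho> + Phi X Y R x y"
  by (simp_all add: gd_def)

lemma Phi_le: "(a,b) \<in> R \<Longrightarrow> Phi X Y R x y \<le> mdist X x a + mdist Y b y"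
  unfolding Phi_def
  by (rule cInf_lower) (auto intro!: bdd_belowI[of _ 0] add_nonneg_nonneg)

lemma Phi_ge:
  assumes "R \<noteq> {}" "\<And>a b. (a,b) \<in> R \<Longrightarrow> c \<le> mdist X x a + mdist Y b y"
  shows "c \<le> Phi X Y R x y"
  unfolding Phi_def
proof (rule cInf_greatest)
  obtain a b where "(a,b) \<in> R" using assms(1) by auto
  then show "{mdist X x a + mdist Y b y | a b. (a,b) \<in> R} \<noteq> {}" by blast
qed (use assms(2) in blast)

lemma Phi_nonneg: "R \<noteq> {} \<Longrightarrow> 0 \<le> Phi X Y R x y"
  by (rule Phi_ge) (auto intro: add_nonneg_nonneg)

locale glue =
  fixes X :: "'a metric" and Y :: "'b metric" and R :: "('a\<times>'b) set" and \<rho> :: real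
  assumes Rsub: "R \<subseteq> mspace X \<times> mspace Y" and Rne: "R \<noteq> {}" and rpos: "\<rho> > 0"
    and hyp: "\<And>a b a' b'. (a,b) \<in> R \<Longrightarrow> (a',b') \<in> R \<Longrightarrow> \<bar>mdist X a a' - mdist Y b b'\<bar> \<le> 2*\<rho>"
begin

abbreviation "P \<equiv> Phi X Y R"

lemma Rmem: "(a,b) \<in> R \<Longrightarrow> a \<in> mspace X \<and> b \<in> mspace Y"
  using Rsub by blast

lemma i: assumes "x \<in> mspace X" "x' \<in> mspace X" shows "P x y \<le> mdist X x x' + P x' y"
proof -
  have "P x y - mdist X x x' \<le> P x' y"
  proof (rule Phi_ge[OF Rne])
    fix a b assume ab: "(a,b) \<in> R"
    have "P x y \<le> mdist X x a + mdist Y b y" by (rule Phi_le[OF ab])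
    moreover have "mdist X x a \<le> mdist X x x' + mdist X x' a"
      using assms Rmem[OF ab] by (simp add: mdist_triangle)
    ultimately show "P x y - mdist X x x' \<le> mdist X x' a + mdist Y b y" by linarith
  qed
  then show ?thesis by linarith
qed

lemma ii: assumes "y \<in> mspace Y" "y' \<in> mspace Y" shows "P x y \<le> P x y' + mdist Y y' y"
proof -
  have "P x y - mdist Y y' y \<le> P x y'"
  proof (rule Phi_ge[OF Rne])
    fix a b assume ab: "(a,b) \<in> R"
    have "P x y \<le> mdist X x a + mdist Y b y" by (rule Phi_le[OF ab])
    moreover have "mdist Y b y \<le> mdist Y b y' + mdist Y y' y"
      using assms Rmem[OF ab] by (simp add: mdist_triangle)
    ultimately show "P x y - mdist Y y' y \<le> mdist X x a + mdist Y b y'" by linarith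
  qed
  then show ?thesis by linarith
qed

lemma iii: assumes "x \<in> mspace X" "x' \<in> mspace X" "y \<in> mspace Y"
  shows "mdist X x x' \<le> 2*\<rho> + P x y + P x' y"
proof -
  have "mdist X x x' - 2*\<rho> - P x y \<le> P x' y"
  proof (rule Phi_ge[OF Rne])
    fix a' b' assume ab': "(a',b') \<in> R"
    have "mdist X x x' - 2*\<rho> - mdist X x' a' - mdist Y b' y \<le> P x y"
    proof (rule Phi_ge[OF Rne])
      fix a b assume ab: "(a,b) \<in> R"
      have m: "a \<in> mspace X" "b \<in> mspace Y" "a' \<in> mspace X" "b' \<in> mspace Y"
        using Rmem[OF ab] Rmem[OF ab'] by auto
      have "mdist X x x' \<le> mdist X x a + mdist X a x'" using m assms by (simp add: mdist_triangle)
      moreover have "mdist X a x' \<le> mdist X a a' + mdist X a' x'" using m assms by (simp add: mdist_triangle)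
      moreover have "mdist X a a' \<le> mdist Y b b' + 2*\<rho>" using hyp[OF ab ab'] by linarith
      moreover have "mdist Y b b' \<le> mdist Y b y + mdist Y y b'" using m assms by (simp add: mdist_triangle)
      moreover have "mdist X a' x' = mdist X x' a'" "mdist Y y b' = mdist Y b' y" by (simp_all add: mdist_commute)
      ultimately show "mdist X x x' - 2*\<rho> - mdist X x' a' - mdist Y b' y \<le> mdist X x a + mdist Y b y"
        by linarith
    qed
    then show "mdist X x x' - 2*\<rho> - P x y \<le> mdist X x' a' + mdist Y b' y" by linarith
  qed
  then show ?thesis by linarith
qed

lemma iv: assumes "y \<in> mspace Y" "y' \<in> mspace Y" "x \<in> mspace X"
  shows "mdist Y y y' \<le> 2*\<rho> + P x y + P x y'"
proof -
  have "mdist Y y y' - 2*\<rho> - P x y \<le> P x y'"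
  proof (rule Phi_ge[OF Rne])
    fix a' b' assume ab': "(a',b') \<in> R"
    have "mdist Y y y' - 2*\<rho> - mdist X x a' - mdist Y b' y' \<le> P x y"
    proof (rule Phi_ge[OF Rne])
      fix a b assume ab: "(a,b) \<in> R"
      have m: "a \<in> mspace X" "b \<in> mspace Y" "a' \<in> mspace X" "b' \<in> mspace Y"
        using Rmem[OF ab] Rmem[OF ab'] by auto
      have "mdist Y y y' \<le> mdist Y y b + mdist Y b y'" using m assms by (simp add: mdist_triangle)
      moreover have "mdist Y b y' \<le> mdist Y b b' + mdist Y b' y'" using m assms by (simp add: mdist_triangle)
      moreover have "mdist Y b b' \<le> mdist X a a' + 2*\<rho>" using hyp[OF ab ab'] by linarith
      moreover have "mdist X a a' \<le> mdist X a x + mdist X x a'" using m assms by (simp add: mdist_triangle)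
      moreover have "mdist X a x = mdist X x a" "mdist Y y b = mdist Y b y" by (simp_all add: mdist_commute)
      ultimately show "mdist Y y y' - 2*\<rho> - mdist X x a' - mdist Y b' y' \<le> mdist X x a + mdist Y b y"
        by linarith
    qed
    then show "mdist Y y y' - 2*\<rho> - P x y \<le> mdist X x a' + mdist Y b' y'" by linarith
  qed
  then show ?thesis by linarith
qed

lemma Pnn: "0 \<le> P x y" by (rule Phi_nonneg[OF Rne])

lemma ms: "Metric_space (Inl ` mspace X \<union> Inr ` mspace Y) (gd X Y R \<rho>)"
proof
  fix u v :: "'a+'b"
  show "0 \<le> gd X Y R \<rho> u v" using Pnn rpos by (cases u; cases v) (auto intro: add_nonneg_nonneg)
  show "gd X Y R \<rho> u v = gd X Y R \<rho> v u" by (cases u; cases v) (auto simp: mdist_commute)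
next
  fix u v :: "'a+'b"
  assume "u \<in> Inl ` mspace X \<union> Inr ` mspace Y" "v \<in> Inl ` mspace X \<union> Inr ` mspace Y"
  moreover have ne: "\<rho> + P x y \<noteq> 0" for x y using Pnn[of x y] rpos by linarith
  ultimately show "(gd X Y R \<rho> u v = 0) = (u = v)"
    by (cases u; cases v) auto
next
  fix u v w :: "'a+'b"
  assume uvw: "u \<in> Inl ` mspace X \<union> Inr ` mspace Y" "v \<in> Inl ` mspace X \<union> Inr ` mspace Y"
     "w \<in> Inl ` mspace X \<union> Inr ` mspace Y"
  show "gd X Y R \<rho> u w \<le> gd X Y R \<rho> u v + gd X Y R \<rho> v w"
  proof (cases u)
    case (Inl x)
    then have x: "x \<in> mspace X" using uvw by auto
    show ?thesis
    proof (cases v)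
      case (Inl x')
      then have x': "x' \<in> mspace X" using uvw by auto
      show ?thesis
      proof (cases w)
        case (Inl x'')
        then have "x'' \<in> mspace X" using uvw by auto
        then show ?thesis using \<open>u = Inl x\<close> \<open>v = Inl x'\<close> Inl x x' by (simp add: mdist_triangle)
      next
        case (Inr y)
        then show ?thesis using \<open>u = Inl x\<close> \<open>v = Inl x'\<close> i[OF x x', of y] by simp
      qed
    next
      case (Inr y)
      then have y: "y \<in> mspace Y" using uvw by auto
      show ?thesis
      proof (cases w)
        case (Inl x'')
        then have x'': "x'' \<in> mspace X" using uvw by auto
        then show ?thesis using \<open>u = Inl x\<close> \<open>v = Inr y\<close> Inl iii[OF x x'' y] by simp
      next
        case (Inr y')
        then have y': "y' \<in> mspace Y" using uvw by auto
        then show ?thesis using \<open>u = Inl x\<close> \<open>v = Inr y\<close> Inr ii[OF y' y, of x] by simp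
      qed
    qed
  next
    case (Inr y)
    then have y: "y \<in> mspace Y" using uvw by auto
    show ?thesis
    proof (cases v)
      case (Inl x')
      then have x': "x' \<in> mspace X" using uvw by auto
      show ?thesis
      proof (cases w)
        case (Inl x'')
        then have x'': "x'' \<in> mspace X" using uvw by auto
        then show ?thesis using \<open>u = Inr y\<close> \<open>v = Inl x'\<close> Inl i[OF x'' x', of y] by (simp add: mdist_commute)
      next
        case (Inr y')
        then have "y' \<in> mspace Y" using uvw by auto
        then show ?thesis using \<open>u = Inr y\<close> \<open>v = Inl x'\<close> Inr iv[OF y \<open>y' \<in> mspace Y\<close> x'] by simp
      qed
    next
      case (Inr y')
      then have y': "y' \<in> mspace Y" using uvw by auto
      show ?thesis
      proof (cases w)
        case (Inl x'')
        then have x'': "x'' \<in> mspace X" using uvw by auto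
        then show ?thesis using \<open>u = Inr y\<close> \<open>v = Inr y'\<close> Inl ii[OF y y', of x''] by (simp add: mdist_commute)
      next
        case (Inr y'')
        then have "y'' \<in> mspace Y" using uvw by auto
        then show ?thesis using \<open>u = Inr y\<close> \<open>v = Inr y'\<close> Inr y y' by (simp add: mdist_triangle)
      qed
    qed
  qed
qed

end




definition hsum :: "real + real \<Rightarrow> real" where
  "hsum u = (case u of Inl x \<Rightarrow> arctan x | Inr y \<Rightarrow> arctan y + 4)"

lemma inj_hsum: "inj hsum"
proof (rule injI)
  fix u v assume e: "hsum u = hsum v"
  have b: "\<bar>arctan z\<bar> < 2" for z using arctan_bounded[of z] pi_less_4 by (simp add: abs_less_iff)
  show "u = v"
  proof (cases u; cases v)
    fix x x' assume "u = Inl x" "v = Inl x'" then show ?thesis using e by (simp add: hsum_def arctan_eq_iff)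
  next
    fix x y assume "u = Inl x" "v = Inr y" then show ?thesis using e b[of x] b[of y] by (simp add: hsum_def)
  next
    fix x y assume "u = Inr y" "v = Inl x" then show ?thesis using e b[of x] b[of y] by (simp add: hsum_def)
  next
    fix y y' assume "u = Inr y" "v = Inr y'" then show ?thesis using e by (simp add: hsum_def arctan_eq_iff)
  qed
qed

lemma glue_exists:
  fixes X Y :: "real metric"
  assumes c: "corr X Y R" and ne: "mspace X \<noteq> {}" and rpos: "\<rho> > 0"
    and hyp: "\<And>a b a' b'. (a,b) \<in> R \<Longrightarrow> (a',b') \<in> R \<Longrightarrow> \<bar>mdist X a a' - mdist Y b b'\<bar> \<le> 2*\<rho>"
  shows "\<exists>(Z::real metric) f g. isometric_embedding X Z f \<and> isometric_embedding Y Z g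
            \<and> hausdorff_dist Z (f ` mspace X) (g ` mspace Y) \<le> \<rho>"
proof -
  have Rsub: "R \<subseteq> mspace X \<times> mspace Y" using c unfolding corr_def by blast
  have Rne: "R \<noteq> {}" using corr_nonempty[OF c ne] .
  interpret glue X Y R \<rho> using Rsub Rne rpos hyp by unfold_locales auto
  define W where "W = metric (Inl ` mspace X \<union> Inr ` mspace Y, gd X Y R \<rho>)"
  have MW: "mspace W = Inl ` mspace X \<union> Inr ` mspace Y" and dW: "mdist W = gd X Y R \<rho>"
    unfolding W_def using Metric_space.mspace_metric[OF ms] Metric_space.mdist_metric[OF ms] by auto
  define Z where "Z = push hsum W"
  have inj: "inj_on hsum (mspace W)" using inj_hsum by (simp add: inj_on_def inj_def)
  define f where "f = hsum \<circ> Inl"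
  define g where "g = hsum \<circ> Inr"
  have df: "mdist Z (f x) (f x') = mdist X x x'" if "x \<in> mspace X" "x' \<in> mspace X" for x x'
    using push_mdist[OF inj, of "Inl x" "Inl x'"] that unfolding Z_def f_def by (simp add: MW dW)
  have dg: "mdist Z (g y) (g y') = mdist Y y y'" if "y \<in> mspace Y" "y' \<in> mspace Y" for y y'
    using push_mdist[OF inj, of "Inr y" "Inr y'"] that unfolding Z_def g_def by (simp add: MW dW)
  have dfg: "mdist Z (f x) (g y) = \<rho> + P x y" if "x \<in> mspace X" "y \<in> mspace Y" for x y
    using push_mdist[OF inj, of "Inl x" "Inr y"] that unfolding Z_def f_def g_def by (simp add: MW dW)
  have MZ: "mspace Z = hsum ` mspace W" unfolding Z_def by (rule push_mspace[OF inj])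
  have ef: "isometric_embedding X Z f"
    unfolding isometric_embedding_def using df MZ MW by (auto simp: f_def)
  have eg: "isometric_embedding Y Z g"
    unfolding isometric_embedding_def using dg MZ MW by (auto simp: g_def)
  have "hausdorff_dist Z (f ` mspace X) (g ` mspace Y) \<le> \<rho>"
  proof (rule hausdorff_le)
    show "f ` mspace X \<noteq> {}" using ne by simp
    show "g ` mspace Y \<noteq> {}" using Rne Rsub by auto
  next
    fix a assume "a \<in> f ` mspace X"
    then obtain x where x: "x \<in> mspace X" "a = f x" by blast
    then obtain y where xy: "(x,y) \<in> R" using c unfolding corr_def by blast
    then have y: "y \<in> mspace Y" using Rsub by blast
    have "P x y \<le> mdist X x x + mdist Y y y" by (rule Phi_le[OF xy])
    moreover have "mdist X x x = 0" "mdist Y y y = 0" using x y by simp_all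
    ultimately have "mdist Z a (g y) \<le> \<rho>" using dfg[OF x(1) y] x y by simp
    then show "\<exists>b\<in>g ` mspace Y. mdist Z a b \<le> \<rho>" using y by blast
  next
    fix b assume "b \<in> g ` mspace Y"
    then obtain y where y: "y \<in> mspace Y" "b = g y" by blast
    then obtain x where xy: "(x,y) \<in> R" using c unfolding corr_def by blast
    then have x: "x \<in> mspace X" using Rsub by blast
    have "P x y \<le> mdist X x x + mdist Y y y" by (rule Phi_le[OF xy])
    moreover have "mdist X x x = 0" "mdist Y y y = 0" using x y by simp_all
    ultimately have "mdist Z (f x) b \<le> \<rho>" using dfg[OF x y(1)] x y by simp
    then show "\<exists>a\<in>f ` mspace X. mdist Z a b \<le> \<rho>" using x by blast
  qed
  then show ?thesis using ef eg by blast
qed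

lemma dGH_lower:
  fixes X Y :: "'a metric" and Z :: "real metric"
  assumes X: "cms X" and Y: "cms Y" and f: "isometric_embedding X Z f" and g: "isometric_embedding Y Z g"
    and h: "hausdorff_dist Z (f ` mspace X) (g ` mspace Y) \<le> r"
  shows "DD X Y \<le> 2 * r"
proof (rule field_le_epsilon)
  fix e :: real assume e: "e > 0"
  obtain BX BY where bX: "bnd X BX" and bY: "bnd Y BY" using X Y unfolding cms_def by blast
  obtain x0 y0 where x0: "x0 \<in> mspace X" and y0: "y0 \<in> mspace Y" using X Y unfolding cms_def by blast
  define K where "K = BX + mdist Z (f x0) (g y0) + BY"
  have fX: "f x \<in> mspace Z" if "x \<in> mspace X" for x using f that unfolding isometric_embedding_def by blast
  have gY: "g y \<in> mspace Z" if "y \<in> mspace Y" for y using g that unfolding isometric_embedding_def by blast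
  have Kb: "mdist Z a b \<le> K" if ab: "a \<in> f ` mspace X" "b \<in> g ` mspace Y" for a b
  proof -
    obtain x y where xy: "x \<in> mspace X" "y \<in> mspace Y" "a = f x" "b = g y" using ab by blast
    have "mdist Z (f x) (g y) \<le> mdist Z (f x) (f x0) + mdist Z (f x0) (g y)"
      using fX gY xy x0 by (simp add: mdist_triangle)
    moreover have "mdist Z (f x0) (g y) \<le> mdist Z (f x0) (g y0) + mdist Z (g y0) (g y)"
      using fX gY xy x0 y0 by (simp add: mdist_triangle)
    moreover have "mdist Z (f x) (f x0) = mdist X x x0" using f xy x0 unfolding isometric_embedding_def by blast
    moreover have "mdist Z (g y0) (g y) = mdist Y y0 y" using g xy y0 unfolding isometric_embedding_def by blast
    moreover have "mdist X x x0 \<le> BX" "mdist Y y0 y \<le> BY" using bX bY xy x0 y0 unfolding bnd_def by auto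
    ultimately show ?thesis unfolding K_def xy(3) xy(4) by linarith
  qed
  have ne1: "f ` mspace X \<noteq> {}" "g ` mspace Y \<noteq> {}" using x0 y0 by auto
  note H = hausdorff_ge[OF h ne1 Kb, of "e/2"]
  define R where "R = {(x,y). x \<in> mspace X \<and> y \<in> mspace Y \<and> mdist Z (f x) (g y) < r + e/2}"
  have cR: "corr X Y R"
    unfolding corr_def
  proof (intro conjI ballI)
    show "R \<subseteq> mspace X \<times> mspace Y" unfolding R_def by auto
    fix x assume x: "x \<in> mspace X"
    then obtain b where "b \<in> g ` mspace Y" "mdist Z (f x) b < r + e/2" using H(1)[of "f x"] e by auto
    then show "\<exists>y. (x,y) \<in> R" using x unfolding R_def by blast
  next
    fix y assume y: "y \<in> mspace Y"
    then obtain a where "a \<in> f ` mspace X" "mdist Z a (g y) < r + e/2" using H(2)[of "g y"] e by auto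
    then show "\<exists>x. (x,y) \<in> R" using y unfolding R_def by blast
  qed
  have "dis X Y R \<le> 2*r + e"
  proof (rule dis_le)
    show "R \<noteq> {}" using corr_nonempty[OF cR] x0 by blast
    fix p q assume "p \<in> R" "q \<in> R"
    then obtain x y x' y' where pq: "p = (x,y)" "q = (x',y')" "x \<in> mspace X" "y \<in> mspace Y"
      "x' \<in> mspace X" "y' \<in> mspace Y" "mdist Z (f x) (g y) < r + e/2" "mdist Z (f x') (g y') < r + e/2"
      unfolding R_def by auto
    have "mdist X x x' = mdist Z (f x) (f x')" using f pq unfolding isometric_embedding_def by simp
    moreover have "mdist Y y y' = mdist Z (g y) (g y')" using g pq unfolding isometric_embedding_def by simp
    moreover have "mdist Z (f x) (f x') \<le> mdist Z (f x) (g y) + mdist Z (g y) (f x')"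
      using fX gY pq by (simp add: mdist_triangle)
    moreover have "mdist Z (g y) (f x') \<le> mdist Z (g y) (g y') + mdist Z (g y') (f x')"
      using fX gY pq by (simp add: mdist_triangle)
    moreover have "mdist Z (g y) (g y') \<le> mdist Z (g y) (f x) + mdist Z (f x) (g y')"
      using fX gY pq by (simp add: mdist_triangle)
    moreover have "mdist Z (f x) (g y') \<le> mdist Z (f x) (f x') + mdist Z (f x') (g y')"
      using fX gY pq by (simp add: mdist_triangle)
    moreover have "mdist Z (g y') (f x') = mdist Z (f x') (g y')" "mdist Z (g y) (f x) = mdist Z (f x) (g y)"
      by (simp_all add: mdist_commute)
    ultimately show "\<bar>mdist X (fst p) (fst q) - mdist Y (snd p) (snd q)\<bar> \<le> 2*r + e"
      using pq by (simp add: abs_le_iff)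
  qed
  then show "DD X Y \<le> 2*r + e" using DD_le[OF X Y cR] by linarith
qed

lemma dGH_eq:
  fixes X Y :: "real metric"
  assumes X: "cms X" and Y: "cms Y"
  shows "dGH X Y = DD X Y / 2"
proof -
  define S where "S = {r. \<exists>(Z::real metric) f g. isometric_embedding X Z f \<and> isometric_embedding Y Z g
                       \<and> hausdorff_dist Z (f ` mspace X) (g ` mspace Y) \<le> r}"
  have lo: "DD X Y / 2 \<le> r" if "r \<in> S" for r
    using that dGH_lower[OF X Y] unfolding S_def by fastforce
  have up: "DD X Y / 2 + e \<in> S" if e: "e > 0" for e
  proof -
    obtain R where R: "corr X Y R" "dis X Y R < DD X Y + e" using DD_approx[OF X Y e] by blast
    obtain BX BY where bX: "bnd X BX" and bY: "bnd Y BY" using X Y unfolding cms_def by blast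
    have "0 \<le> DD X Y" using DD_nonneg[OF X Y] .
    then have pos: "DD X Y / 2 + e > 0" using e by linarith
    have "\<exists>(Z::real metric) f g. isometric_embedding X Z f \<and> isometric_embedding Y Z g
            \<and> hausdorff_dist Z (f ` mspace X) (g ` mspace Y) \<le> DD X Y / 2 + e"
    proof (rule glue_exists[OF R(1) _ pos])
      show "mspace X \<noteq> {}" using X unfolding cms_def by blast
      fix a b a' b' assume "(a,b) \<in> R" "(a',b') \<in> R"
      from dis_ge[OF bX bY R(1) this] R(2)
      show "\<bar>mdist X a a' - mdist Y b b'\<bar> \<le> 2 * (DD X Y / 2 + e)" using e by simp
    qed
    then show ?thesis unfolding S_def by blast
  qed
  have "dGH X Y = Inf S" unfolding dGH_def S_def by simp
  moreover have "DD X Y / 2 \<le> Inf S"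
    using up[of 1] lo by (intro cInf_greatest) auto
  moreover have "Inf S \<le> DD X Y / 2"
  proof (rule field_le_epsilon)
    fix e :: real assume "e > 0"
    show "Inf S \<le> DD X Y / 2 + e"
      using up[OF \<open>e>0\<close>] lo by (intro cInf_lower) (auto intro: bdd_belowI[of S "DD X Y / 2"])
  qed
  ultimately show ?thesis by linarith
qed




lemma iso_class_eq: "isometric_ms A B \<Longrightarrow> iso_class A = iso_class B"
  unfolding iso_class_def using isometric_sym isometric_trans by blast

lemma rep_facts:
  assumes "W \<in> GH_space"
  shows "rep W \<in> W" "compact_ms (rep W)" "iso_class (rep W) = W"
proof -
  obtain m where m: "W = iso_class m" "compact_ms m" using assms unfolding GH_space_def by blast
  have "m \<in> W" using m isometric_refl unfolding iso_class_def by blast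
  then show rW: "rep W \<in> W" unfolding rep_def by (rule someI)
  then have i: "isometric_ms m (rep W)" using m unfolding iso_class_def by blast
  then show "compact_ms (rep W)" using m isometric_compact by blast
  show "iso_class (rep W) = W" using iso_class_eq[OF isometric_sym[OF i]] m by simp
qed

lemma class_in: "compact_ms X \<Longrightarrow> iso_class X \<in> GH_space"
  unfolding GH_space_def by blast

lemma rep_class: "isometric_ms X (rep (iso_class X))"
proof -
  have "X \<in> iso_class X" using isometric_refl unfolding iso_class_def by blast
  then have "rep (iso_class X) \<in> iso_class X" unfolding rep_def by (rule someI)
  then show ?thesis unfolding iso_class_def by blast
qed

lemma dGH_M_rep:
  assumes "A \<in> GH_space" "B \<in> GH_space"
  shows "dGH_M A B = DD (rep A) (rep B) / 2"
  unfolding dGH_M_def using dGH_eq rep_facts(2) assms compact_ms_cms by blast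

lemma dGH_M_class:
  fixes X :: "'c metric"
  assumes X: "compact_ms X" and h: "inj_on h (mspace X)" and B: "B \<in> GH_space"
  shows "dGH_M (iso_class (push h X)) B = DD X (rep B) / 2"
proof -
  have i1: "isometric_ms X (push h X)" by (rule push_isometric[OF h])
  have c1: "compact_ms (push h X)" using isometric_compact[OF X i1] .
  have A: "iso_class (push h X) \<in> GH_space" using class_in[OF c1] .
  have i2: "isometric_ms (push h X) (rep (iso_class (push h X)))" by (rule rep_class)
  have c2: "compact_ms (rep (iso_class (push h X)))" using isometric_compact[OF c1 i2] .
  have cB: "cms (rep B)" using rep_facts(2)[OF B] compact_ms_cms by blast
  have "dGH_M (iso_class (push h X)) B = DD (rep (iso_class (push h X))) (rep B) / 2"
    by (rule dGH_M_rep[OF A B])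
  also have "DD (rep (iso_class (push h X))) (rep B) = DD X (rep B)"
    using DD_iso_left[OF compact_ms_cms[OF X] compact_ms_cms[OF c2] cB isometric_trans[OF i1 i2]] by simp
  finally show ?thesis .
qed

lemma class_in_push:
  fixes X :: "'c metric"
  assumes X: "compact_ms X" and h: "inj_on h (mspace X)"
  shows "iso_class (push h X) \<in> GH_space"
  using class_in isometric_compact[OF X push_isometric[OF h]] by blast

lemma openin_GH:
  "openin GH_topology U \<longleftrightarrow> U \<subseteq> GH_space \<and> (\<forall>x\<in>U. \<exists>e>0. \<forall>y\<in>GH_space. dGH_M x y < e \<longrightarrow> y \<in> U)"
  unfolding GH_topology_def dist_topology_def
  using topology_inverse'[OF istopology_dist_topology[of GH_space dGH_M]] by simp

lemma topspace_GH: "topspace GH_topology = GH_space"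
proof
  show "topspace GH_topology \<subseteq> GH_space" unfolding topspace_def using openin_GH by blast
  have "openin GH_topology GH_space" unfolding openin_GH by (auto intro: exI[of _ 1])
  then show "GH_space \<subseteq> topspace GH_topology" unfolding topspace_def by blast
qed

lemma pathin_GH:
  assumes img: "\<And>t. t \<in> {0..1} \<Longrightarrow> g t \<in> GH_space"
    and cont: "\<And>t e. t \<in> {0..1} \<Longrightarrow> e > 0 \<Longrightarrow> \<exists>d>0. \<forall>t'\<in>{0..1}. \<bar>t' - t\<bar> < d \<longrightarrow> dGH_M (g t) (g t') < e"
  shows "pathin GH_topology g"
  unfolding pathin_def continuous_map
proof (intro conjI allI impI)
  show "g ` topspace (top_of_set {0..1}) \<subseteq> topspace GH_topology" using img by (auto simp: topspace_GH)
  fix U assume U: "openin GH_topology U"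
  show "openin (top_of_set {0..1}) {x \<in> topspace (top_of_set {0..1}). g x \<in> U}"
    unfolding openin_euclidean_subtopology_iff
  proof (intro conjI ballI)
    show "{x \<in> topspace (top_of_set {0..1}). g x \<in> U} \<subseteq> {0..1}" by auto
    fix t assume t: "t \<in> {x \<in> topspace (top_of_set {0..1::real}). g x \<in> U}"
    then have t01: "t \<in> {0..1}" and gt: "g t \<in> U" by auto
    then obtain e where e: "e > 0" "\<forall>y\<in>GH_space. dGH_M (g t) y < e \<longrightarrow> y \<in> U" using U openin_GH by blast
    obtain d where d: "d > 0" "\<forall>t'\<in>{0..1}. \<bar>t' - t\<bar> < d \<longrightarrow> dGH_M (g t) (g t') < e"
      using cont[OF t01 e(1)] by blast
    show "\<exists>e>0. \<forall>x'\<in>{0..1}. dist x' t < e \<longrightarrow> x' \<in> {x \<in> topspace (top_of_set {0..1}). g x \<in> U}"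
      using d e img by (intro exI[of _ d]) (auto simp: dist_real_def)
  qed
qed




lemma corr_same_carrier:
  "mspace W' = mspace W \<Longrightarrow> corr X W' R = corr X W R"
  unfolding corr_def by simp

lemma DD_scale:
  assumes X: "cms X" and W: "cms W" and W': "cms W'" and same: "mspace W' = mspace W"
    and md: "\<And>a b. a \<in> mspace W \<Longrightarrow> b \<in> mspace W \<Longrightarrow> mdist W' a b = k * mdist W a b"
    and k: "k \<ge> 1" and bX: "bnd X B" and big: "DD X W > B"
  shows "k * DD X W \<le> DD X W'"
proof (rule DD_ge[OF X W'])
  fix R assume R': "corr X W' R"
  then have R: "corr X W R" using corr_same_carrier[OF same, of X R] by simp
  obtain BW' where bW': "bnd W' BW'" using W' unfolding cms_def by blast
  obtain BW where bW: "bnd W BW" using W unfolding cms_def by blast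
  have Rne: "R \<noteq> {}" using corr_nonempty[OF R] X unfolding cms_def by blast
  show "k * DD X W \<le> dis X W' R"
  proof (rule ccontr)
    assume "\<not> ?thesis"
    then have lt: "dis X W' R < k * DD X W" by simp
    define e where "e = min ((DD X W - B)/2) ((k * DD X W - dis X W' R)/(2*k))"
    have "(DD X W - B)/2 > 0" using big by simp
    moreover have "(k * DD X W - dis X W' R)/(2*k) > 0" using lt k by (intro divide_pos_pos) auto
    ultimately have e: "e > 0" unfolding e_def by simp
    have e1: "e \<le> (DD X W - B)/2" unfolding e_def by (rule min.cobounded1)
    have e2: "e \<le> (k * DD X W - dis X W' R)/(2*k)" unfolding e_def by (rule min.cobounded2)
    define T where "T = {\<bar>mdist X (fst p) (fst q) - mdist W (snd p) (snd q)\<bar> | p q. p \<in> R \<and> q \<in> R}"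
    have "DD X W \<le> dis X W R" by (rule DD_le[OF X W R])
    moreover have "dis X W R = Sup T" unfolding dis_def T_def by (rule refl)
    ultimately have lt2: "DD X W - e < Sup T" using e by linarith
    obtain p0 where p0: "p0 \<in> R" using Rne by blast
    have Tne: "T \<noteq> {}" unfolding T_def using p0 by blast
    from less_cSupD[OF Tne lt2] obtain z where z: "z \<in> T" "DD X W - e < z" by blast
    from z(1) have "\<exists>p q. z = \<bar>mdist X (fst p) (fst q) - mdist W (snd p) (snd q)\<bar> \<and> p \<in> R \<and> q \<in> R"
      unfolding T_def by (rule CollectD)
    then obtain p q where pq0: "z = \<bar>mdist X (fst p) (fst q) - mdist W (snd p) (snd q)\<bar>" "p \<in> R" "q \<in> R"
      by blast
    have pq: "p \<in> R" "q \<in> R" "DD X W - e < \<bar>mdist X (fst p) (fst q) - mdist W (snd p) (snd q)\<bar>"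
      using pq0 z(2) by auto
    have mem: "fst p \<in> mspace X" "fst q \<in> mspace X" "snd p \<in> mspace W" "snd q \<in> mspace W"
      using R pq unfolding corr_def by auto
    have dxB: "mdist X (fst p) (fst q) \<le> B" using bX mem unfolding bnd_def by blast
    have dx0: "0 \<le> mdist X (fst p) (fst q)" by simp
    have "2 * e \<le> DD X W - B" using e1 by simp
    then have gB: "DD X W - e > B" using e big by linarith
    have or: "DD X W - e < mdist X (fst p) (fst q) - mdist W (snd p) (snd q) \<or>
              DD X W - e < mdist W (snd p) (snd q) - mdist X (fst p) (fst q)"
    proof (cases "0 \<le> mdist X (fst p) (fst q) - mdist W (snd p) (snd q)")
      case True
      then show ?thesis using pq(3) by (simp add: abs_of_nonneg)
    next
      case False
      then show ?thesis using pq(3) by (simp add: abs_of_neg)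
    qed
    have "mdist X (fst p) (fst q) - mdist W (snd p) (snd q) \<le> B" using dxB mdist_nonneg[of W "snd p" "snd q"] by linarith
    then have key: "DD X W - e < mdist W (snd p) (snd q) - mdist X (fst p) (fst q)"
      using or gB by linarith
    have "1 * mdist X (fst p) (fst q) \<le> k * mdist X (fst p) (fst q)"
      using k dx0 by (rule mult_right_mono)
    then have "k * (mdist W (snd p) (snd q) - mdist X (fst p) (fst q)) \<le> k * mdist W (snd p) (snd q) - mdist X (fst p) (fst q)"
      by (simp add: right_diff_distrib)
    moreover have "k * (DD X W - e) < k * (mdist W (snd p) (snd q) - mdist X (fst p) (fst q))"
      using key k by simp
    moreover have "\<bar>mdist X (fst p) (fst q) - k * mdist W (snd p) (snd q)\<bar> \<le> dis X W' R"
      using dis_ge[OF bX bW' R' pq(1,2)] md[OF mem(3,4)] by simp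
    moreover have "2 * (k * e) \<le> k * DD X W - dis X W' R"
    proof -
      have "k * e \<le> k * ((k * DD X W - dis X W' R)/(2*k))" using e2 k by (intro mult_left_mono) auto
      also have "\<dots> = (k * DD X W - dis X W' R)/2" using k by (simp add: field_simps)
      finally show ?thesis by simp
    qed
    moreover have "k * (DD X W - e) = k * DD X W - k * e" by (simp add: right_diff_distrib)
    moreover have "k * mdist W (snd p) (snd q) - mdist X (fst p) (fst q) \<le> \<bar>mdist X (fst p) (fst q) - k * mdist W (snd p) (snd q)\<bar>"
      by simp
    ultimately show False using lt by linarith
  qed
qed

lemma DD_lower_pt:
  assumes X: "cms X" and W: "cms W" and bX: "bnd X B" and w: "w \<in> mspace W" "w' \<in> mspace W"
  shows "mdist W w w' - B \<le> DD X W"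
proof (rule DD_ge[OF X W])
  fix R assume R: "corr X W R"
  obtain BW where bW: "bnd W BW" using W unfolding cms_def by blast
  obtain x x' where "(x,w) \<in> R" "(x',w') \<in> R" using R w unfolding corr_def by blast
  moreover from this have "x \<in> mspace X" "x' \<in> mspace X" using R unfolding corr_def by auto
  ultimately have "\<bar>mdist X x x' - mdist W w w'\<bar> \<le> dis X W R" "mdist X x x' \<le> B"
    using dis_ge[OF bX bW R] bX unfolding bnd_def by (force, blast)
  then show "mdist W w w' - B \<le> dis X W R" by linarith
qed

lemma DD_upper_bnd:
  assumes X: "cms X" and W: "cms W" and bX: "bnd X B" and bW: "bnd W C"
  shows "DD X W \<le> B + C"
proof -
  have c: "corr X W (mspace X \<times> mspace W)" using X W unfolding corr_def cms_def by auto
  have "dis X W (mspace X \<times> mspace W) \<le> B + C"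
  proof (rule dis_le)
    show "mspace X \<times> mspace W \<noteq> {}" using X W unfolding cms_def by auto
    fix p q assume "p \<in> mspace X \<times> mspace W" "q \<in> mspace X \<times> mspace W"
    then have "mdist X (fst p) (fst q) \<le> B" "mdist W (snd p) (snd q) \<le> C"
      using bX bW unfolding bnd_def by auto
    moreover have "0 \<le> mdist X (fst p) (fst q)" "0 \<le> mdist W (snd p) (snd q)" by simp_all
    ultimately show "\<bar>mdist X (fst p) (fst q) - mdist W (snd p) (snd q)\<bar> \<le> B + C" by linarith
  qed
  then show ?thesis using DD_le[OF X W c] by linarith
qed




section \<open>The interpolating family\<close>

definition gmap :: "real \<Rightarrow> real \<Rightarrow> real \<times> bool \<Rightarrow> real \<times> bool" where
  "gmap y0 t p = (if t = 1 then y0 else fst p, if t = 0 then False else snd p)"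

definition Cset :: "real metric \<Rightarrow> real \<Rightarrow> real \<Rightarrow> (real \<times> bool) set" where
  "Cset Y y0 t = gmap y0 t ` (mspace Y \<times> UNIV)"

definition mt :: "real metric \<Rightarrow> real \<Rightarrow> real \<times> bool \<Rightarrow> real \<times> bool \<Rightarrow> real" where
  "mt Y t p q = (1 - t) * mdist Y (fst p) (fst q) + t * (if snd p = snd q then 0 else 1)"

definition Fam :: "real metric \<Rightarrow> real \<Rightarrow> real \<Rightarrow> real \<Rightarrow> (real \<times> bool) metric" where
  "Fam Y y0 t s = metric (Cset Y y0 t, \<lambda>p q. s * mt Y t p q)"

lemma Cset_mem:
  assumes "y0 \<in> mspace Y" "p \<in> Cset Y y0 t"
  shows "fst p \<in> mspace Y" "t = 1 \<Longrightarrow> fst p = y0" "t = 0 \<Longrightarrow> snd p = False"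
  using assms unfolding Cset_def gmap_def by auto

lemma mt_nonneg: "0 \<le> t \<Longrightarrow> t \<le> 1 \<Longrightarrow> 0 \<le> mt Y t p q"
  unfolding mt_def by (intro add_nonneg_nonneg mult_nonneg_nonneg) auto

lemma Fam_ms:
  assumes y0: "y0 \<in> mspace Y" and t: "0 \<le> t" "t \<le> 1" and s: "s > 0"
  shows "Metric_space (Cset Y y0 t) (\<lambda>p q. s * mt Y t p q)"
proof
  fix p q
  show "0 \<le> s * mt Y t p q" using mt_nonneg[OF t] s by simp
  show "s * mt Y t p q = s * mt Y t q p" unfolding mt_def by (simp add: mdist_commute eq_commute)
next
  fix p q assume pq: "p \<in> Cset Y y0 t" "q \<in> Cset Y y0 t"
  have m: "fst p \<in> mspace Y" "fst q \<in> mspace Y" using Cset_mem[OF y0] pq by auto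
  show "(s * mt Y t p q = 0) = (p = q)"
  proof
    assume "p = q" then show "s * mt Y t p q = 0" unfolding mt_def using m by simp
  next
    assume z: "s * mt Y t p q = 0"
    then have z': "mt Y t p q = 0" using s by simp
    have a: "0 \<le> (1 - t) * mdist Y (fst p) (fst q)" using t by simp
    have b: "0 \<le> t * (if snd p = snd q then 0 else 1::real)" using t by simp
    have za: "(1 - t) * mdist Y (fst p) (fst q) = 0" and zb: "t * (if snd p = snd q then 0 else 1::real) = 0"
      using z' a b unfolding mt_def by linarith+
    have "fst p = fst q"
    proof (cases "t = 1")
      case True then show ?thesis using Cset_mem[OF y0] pq by auto
    next
      case False then show ?thesis using za m by simp
    qed
    moreover have "snd p = snd q"
    proof (cases "t = 0")
      case True then show ?thesis using Cset_mem[OF y0] pq by auto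
    next
      case False then show ?thesis using zb by (simp split: if_splits)
    qed
    ultimately show "p = q" by (simp add: prod_eq_iff)
  qed
next
  fix p q r assume pqr: "p \<in> Cset Y y0 t" "q \<in> Cset Y y0 t" "r \<in> Cset Y y0 t"
  have m: "fst p \<in> mspace Y" "fst q \<in> mspace Y" "fst r \<in> mspace Y" using Cset_mem[OF y0] pqr by auto
  have "mdist Y (fst p) (fst r) \<le> mdist Y (fst p) (fst q) + mdist Y (fst q) (fst r)"
    using m by (simp add: mdist_triangle)
  then have 1: "(1 - t) * mdist Y (fst p) (fst r) \<le> (1 - t) * mdist Y (fst p) (fst q) + (1 - t) * mdist Y (fst q) (fst r)"
    using t by (metis distrib_left diff_ge_0_iff_ge mult_left_mono)
  have "(if snd p = snd r then 0 else 1::real) \<le> (if snd p = snd q then 0 else 1) + (if snd q = snd r then 0 else 1)"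
    by auto
  then have 2: "t * (if snd p = snd r then 0 else 1::real) \<le> t * (if snd p = snd q then 0 else 1) + t * (if snd q = snd r then 0 else 1)"
    using t by (metis distrib_left mult_left_mono)
  have "mt Y t p r \<le> mt Y t p q + mt Y t q r" using 1 2 unfolding mt_def by linarith
  then show "s * mt Y t p r \<le> s * mt Y t p q + s * mt Y t q r"
    using s by (metis distrib_left less_eq_real_def mult_left_mono)
qed

lemma Fam_space:
  assumes "y0 \<in> mspace Y" "0 \<le> t" "t \<le> 1" "s > 0"
  shows "mspace (Fam Y y0 t s) = Cset Y y0 t" "mdist (Fam Y y0 t s) = (\<lambda>p q. s * mt Y t p q)"
  unfolding Fam_def using Metric_space.mspace_metric[OF Fam_ms[OF assms]] Metric_space.mdist_metric[OF Fam_ms[OF assms]]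
  by auto

lemma mt_le:
  assumes "bnd Y D" "0 \<le> D" "y0 \<in> mspace Y" "0 \<le> t" "t \<le> 1" "p \<in> Cset Y y0 t" "q \<in> Cset Y y0 t"
  shows "mt Y t p q \<le> D + 1"
proof -
  have "mdist Y (fst p) (fst q) \<le> D" using assms Cset_mem[OF assms(3)] unfolding bnd_def by auto
  then have "(1 - t) * mdist Y (fst p) (fst q) \<le> 1 * D" using assms
    by (intro mult_mono) auto
  moreover have "t * (if snd p = snd q then 0 else 1::real) \<le> 1" using assms by auto
  ultimately show ?thesis unfolding mt_def by linarith
qed

lemma Fam_compact:
  assumes Y: "compact_ms Y" and y0: "y0 \<in> mspace Y" and t: "0 \<le> t" "t \<le> 1" and s: "s > 0"
  shows "compact_ms (Fam Y y0 t s)"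
proof -
  note sp = Fam_space[OF y0 t s]
  have cY: "compact_space (mtopology_of Y)" using Y unfolding compact_ms_def by blast
  have part: "compactin (mtopology_of (Fam Y y0 t s)) ((\<lambda>y. gmap y0 t (y, b)) ` mspace Y)" for b
  proof (rule compactin_lipschitz_image[OF cY, of _ _ s])
    show "(\<lambda>y. gmap y0 t (y, b)) ` mspace Y \<subseteq> mspace (Fam Y y0 t s)"
      using sp unfolding Cset_def by auto
    fix x y assume "x \<in> mspace Y" "y \<in> mspace Y"
    have "mt Y t (gmap y0 t (x, b)) (gmap y0 t (y, b)) \<le> mdist Y x y"
    proof (cases "t = 1")
      case True then show ?thesis unfolding mt_def gmap_def by simp
    next
      case False
      then have "mt Y t (gmap y0 t (x, b)) (gmap y0 t (y, b)) = (1 - t) * mdist Y x y"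
        unfolding mt_def gmap_def by simp
      also have "\<dots> \<le> 1 * mdist Y x y" using t by (intro mult_right_mono) auto
      finally show ?thesis by simp
    qed
    then show "mdist (Fam Y y0 t s) (gmap y0 t (x, b)) (gmap y0 t (y, b)) \<le> s * mdist Y x y"
      using s sp by (simp add: mult_left_mono)
  qed
  have eq: "mspace (Fam Y y0 t s) = (\<lambda>y. gmap y0 t (y, False)) ` mspace Y \<union> (\<lambda>y. gmap y0 t (y, True)) ` mspace Y"
    using sp unfolding Cset_def by (auto simp: image_iff) (metis (full_types))
  have "compactin (mtopology_of (Fam Y y0 t s)) (mspace (Fam Y y0 t s))"
    unfolding eq by (intro compactin_Un part)
  moreover have "mspace (Fam Y y0 t s) \<noteq> {}" using sp y0 unfolding Cset_def by auto
  ultimately show ?thesis unfolding compact_ms_def compact_space_ms by simp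
qed




lemma arithA:
  fixes t t' a a' D :: real
  assumes "0 \<le> t" "t \<le> 1" "0 \<le> t'" "t' \<le> 1" "0 \<le> a" "a \<le> D" "0 \<le> a'" "a' \<le> D"
    "a = a' \<or> t = 1 \<or> t' = 1"
  shows "\<bar>(1 - t) * a - (1 - t') * a'\<bar> \<le> \<bar>t - t'\<bar> * D"
proof -
  consider "t = 1" | "t' = 1" | "a = a'" using assms by blast
  then show ?thesis
  proof cases
    case 1
    have "(1 - t') * a' \<le> (1 - t') * D" using assms by (intro mult_left_mono) auto
    moreover have "0 \<le> (1 - t') * a'" using assms by simp
    moreover have "\<bar>t - t'\<bar> = 1 - t'" using 1 assms by simp
    moreover have "(1 - t) * a - (1 - t') * a' = - ((1 - t') * a')" using 1 by simp
    ultimately show ?thesis by (metis abs_minus_cancel abs_of_nonneg)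
  next
    case 2
    have "(1 - t) * a \<le> (1 - t) * D" using assms by (intro mult_left_mono) auto
    moreover have "0 \<le> (1 - t) * a" using assms by simp
    moreover have "\<bar>t - t'\<bar> = 1 - t" using 2 assms by simp
    moreover have "(1 - t) * a - (1 - t') * a' = (1 - t) * a" using 2 by simp
    ultimately show ?thesis by (metis abs_of_nonneg)
  next
    case 3
    have "\<bar>(1 - t) * a - (1 - t') * a\<bar> = \<bar>t - t'\<bar> * a"
      using assms by (simp add: left_diff_distrib[symmetric] abs_mult) (simp add: abs_minus_commute)
    also have "\<dots> \<le> \<bar>t - t'\<bar> * D" using assms by (intro mult_left_mono) auto
    finally show ?thesis using 3 by simp
  qed
qed

lemma arithB:
  fixes t t' :: real and c c' :: bool
  assumes "0 \<le> t" "t \<le> 1" "0 \<le> t'" "t' \<le> 1" "c = c' \<or> t = 0 \<or> t' = 0"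
  shows "\<bar>t * (if c then 0 else 1) - t' * (if c' then 0 else 1)\<bar> \<le> \<bar>t - t'\<bar>"
  using assms by (cases c; cases c'; auto simp: abs_if)

lemma abs_split2: fixes x u v :: real shows "x = u + v \<Longrightarrow> \<bar>x\<bar> \<le> \<bar>u\<bar> + \<bar>v\<bar>"
  by simp

definition Rf :: "real metric \<Rightarrow> real \<Rightarrow> real \<Rightarrow> real \<Rightarrow> ((real\<times>bool)\<times>(real\<times>bool)) set" where
  "Rf Y y0 t t' = {(p,q). p \<in> Cset Y y0 t \<and> q \<in> Cset Y y0 t' \<and> (fst p = fst q \<or> t = 1 \<or> t' = 1)
                     \<and> (snd p = snd q \<or> t = 0 \<or> t' = 0)}"

lemma Fam_cms:
  assumes Y: "compact_ms Y" and y0: "y0 \<in> mspace Y" and t: "0 \<le> t" "t \<le> 1" and s: "s > 0"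
  shows "cms (Fam Y y0 t s)"
  using compact_ms_cms[OF Fam_compact[OF assms]] .

lemma Fam_close:
  assumes Y: "compact_ms Y" and y0: "y0 \<in> mspace Y" and bY: "bnd Y D" and D: "0 \<le> D"
    and t: "0 \<le> t" "t \<le> 1" and t': "0 \<le> t'" "t' \<le> 1" and s: "s > 0" and s': "s' > 0"
  shows "DD (Fam Y y0 t s) (Fam Y y0 t' s') \<le> (D + 1) * (\<bar>s - s'\<bar> + s' * \<bar>t - t'\<bar>)"
proof -
  note sp = Fam_space[OF y0 t s] and sp' = Fam_space[OF y0 t' s']
  have c: "corr (Fam Y y0 t s) (Fam Y y0 t' s') (Rf Y y0 t t')"
    unfolding corr_def sp sp'
  proof (intro conjI ballI)
    show "Rf Y y0 t t' \<subseteq> Cset Y y0 t \<times> Cset Y y0 t'" unfolding Rf_def by auto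
    fix p assume "p \<in> Cset Y y0 t"
    then obtain y b where yb: "y \<in> mspace Y" "p = gmap y0 t (y,b)" unfolding Cset_def by auto
    have "gmap y0 t' (y,b) \<in> Cset Y y0 t'" using yb unfolding Cset_def by auto
    moreover have "p \<in> Cset Y y0 t" using \<open>p \<in> Cset Y y0 t\<close> .
    ultimately have "(p, gmap y0 t' (y,b)) \<in> Rf Y y0 t t'" using yb unfolding Rf_def gmap_def by auto
    then show "\<exists>q. (p,q) \<in> Rf Y y0 t t'" by blast
  next
    fix q assume "q \<in> Cset Y y0 t'"
    then obtain y b where yb: "y \<in> mspace Y" "q = gmap y0 t' (y,b)" unfolding Cset_def by auto
    have "gmap y0 t (y,b) \<in> Cset Y y0 t" using yb unfolding Cset_def by auto
    moreover have "q \<in> Cset Y y0 t'" using \<open>q \<in> Cset Y y0 t'\<close> .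
    ultimately have "(gmap y0 t (y,b), q) \<in> Rf Y y0 t t'" using yb unfolding Rf_def gmap_def by auto
    then show "\<exists>p. (p,q) \<in> Rf Y y0 t t'" by blast
  qed
  have "dis (Fam Y y0 t s) (Fam Y y0 t' s') (Rf Y y0 t t') \<le> (D + 1) * (\<bar>s - s'\<bar> + s' * \<bar>t - t'\<bar>)"
  proof (rule dis_le)
    show "Rf Y y0 t t' \<noteq> {}"
      using corr_nonempty[OF c] y0 sp unfolding Cset_def by auto
    fix pq pq' assume pq: "pq \<in> Rf Y y0 t t'" "pq' \<in> Rf Y y0 t t'"
    obtain p q where e1: "pq = (p,q)" by (cases pq)
    obtain p' q' where e2: "pq' = (p',q')" by (cases pq')
    have e: "pq = (p,q)" "pq' = (p',q')" using e1 e2 by simp_all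
    have r1: "(p,q) \<in> Rf Y y0 t t'" using pq(1) e1 by simp
    have r2: "(p',q') \<in> Rf Y y0 t t'" using pq(2) e2 by simp
    have m: "p \<in> Cset Y y0 t" "q \<in> Cset Y y0 t'" "p' \<in> Cset Y y0 t" "q' \<in> Cset Y y0 t'"
      using r1 r2 unfolding Rf_def by simp_all
    have c1: "fst p = fst q \<or> t = 1 \<or> t' = 1" "snd p = snd q \<or> t = 0 \<or> t' = 0"
      using r1 unfolding Rf_def by simp_all
    have c2: "fst p' = fst q' \<or> t = 1 \<or> t' = 1" "snd p' = snd q' \<or> t = 0 \<or> t' = 0"
      using r2 unfolding Rf_def by simp_all
    have fm: "fst p \<in> mspace Y" "fst q \<in> mspace Y" "fst p' \<in> mspace Y" "fst q' \<in> mspace Y"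
      using Cset_mem[OF y0] m by auto
    define a where "a = mdist Y (fst p) (fst p')"
    define a' where "a' = mdist Y (fst q) (fst q')"
    have aD: "0 \<le> a" "a \<le> D" "0 \<le> a'" "a' \<le> D" using bY fm unfolding a_def a'_def bnd_def by auto
    have "a = a' \<or> t = 1 \<or> t' = 1" using c1(1) c2(1) unfolding a_def a'_def by auto
    note A = arithA[OF t t' aD this]
    have "(snd p = snd p') = (snd q = snd q') \<or> t = 0 \<or> t' = 0" using c1(2) c2(2) by auto
    note B = arithB[OF t t' this]
    have "mt Y t p p' - mt Y t' q q' = ((1 - t) * a - (1 - t') * a') +
        (t * (if snd p = snd p' then 0 else 1) - t' * (if snd q = snd q' then 0 else 1))"
      unfolding mt_def a_def a'_def by linarith
    then have "\<bar>mt Y t p p' - mt Y t' q q'\<bar> \<le> \<bar>(1 - t) * a - (1 - t') * a'\<bar> +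
        \<bar>t * (if snd p = snd p' then 0 else 1) - t' * (if snd q = snd q' then 0 else 1)\<bar>"
      by (rule abs_split2)
    moreover have "\<bar>t - t'\<bar> * D + \<bar>t - t'\<bar> = \<bar>t - t'\<bar> * (D + 1)" by (simp add: algebra_simps)
    ultimately have mtd: "\<bar>mt Y t p p' - mt Y t' q q'\<bar> \<le> \<bar>t - t'\<bar> * (D + 1)"
      using A B by linarith
    have mb: "0 \<le> mt Y t p p'" "mt Y t p p' \<le> D + 1"
      using mt_nonneg[OF t] mt_le[OF bY D y0 t m(1) m(3)] by auto
    have "s * mt Y t p p' - s' * mt Y t' q q' = (s - s') * mt Y t p p' + s' * (mt Y t p p' - mt Y t' q q')"
      by (simp add: algebra_simps)
    then have "\<bar>s * mt Y t p p' - s' * mt Y t' q q'\<bar> \<le> \<bar>(s - s') * mt Y t p p'\<bar> + \<bar>s' * (mt Y t p p' - mt Y t' q q')\<bar>"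
      by (rule abs_split2)
    also have "\<dots> = \<bar>s - s'\<bar> * mt Y t p p' + s' * \<bar>mt Y t p p' - mt Y t' q q'\<bar>"
      using mb s' by (simp add: abs_mult)
    also have "\<dots> \<le> \<bar>s - s'\<bar> * (D + 1) + s' * (\<bar>t - t'\<bar> * (D + 1))"
      using mb mtd s' by (intro add_mono mult_left_mono) auto
    also have "\<dots> = (D + 1) * (\<bar>s - s'\<bar> + s' * \<bar>t - t'\<bar>)" by (simp add: algebra_simps)
    finally show "\<bar>mdist (Fam Y y0 t s) (fst pq) (fst pq') - mdist (Fam Y y0 t' s') (snd pq) (snd pq')\<bar>
        \<le> (D + 1) * (\<bar>s - s'\<bar> + s' * \<bar>t - t'\<bar>)" using e sp sp' by simp
  qed
  then show ?thesis
    using DD_le[OF Fam_cms[OF Y y0 t s] Fam_cms[OF Y y0 t' s'] c] by linarith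
qed




locale sph =
  fixes G :: "real metric" and d r :: real and Y :: "real metric" and y0 :: real
  assumes G: "compact_ms G" and bG: "bnd G d" and rd: "r > d"
    and Y: "compact_ms Y" and y0: "y0 \<in> mspace Y" and Yr: "DD G Y = 2 * r"
begin

definition D where "D = mdiam Y"
definition H where "H t s = DD G (Fam Y y0 t s)"

lemma cG: "cms G" using compact_ms_cms[OF G] .
lemma cY: "cms Y" using compact_ms_cms[OF Y] .
lemma bY: "bnd Y D" unfolding D_def using mdiam_bnd[OF cY] .
lemma D0: "0 \<le> D" using bnd_nonneg[OF bY] cY unfolding cms_def by blast
lemma d0: "0 \<le> d" using bnd_nonneg[OF bG] cG unfolding cms_def by blast
lemma r0: "r > 0" using rd d0 by linarith

lemma cF: "0 \<le> t \<Longrightarrow> t \<le> 1 \<Longrightarrow> s > 0 \<Longrightarrow> cms (Fam Y y0 t s)"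
  using Fam_cms[OF Y y0] by blast

lemma H_lip:
  assumes t: "0 \<le> t" "t \<le> 1" and t': "0 \<le> t'" "t' \<le> 1" and s: "s > 0" and s': "s' > 0"
  shows "\<bar>H t s - H t' s'\<bar> \<le> (D + 1) * (\<bar>s - s'\<bar> + s' * \<bar>t - t'\<bar>)"
proof -
  have cl: "DD (Fam Y y0 t s) (Fam Y y0 t' s') \<le> (D + 1) * (\<bar>s - s'\<bar> + s' * \<bar>t - t'\<bar>)"
    by (rule Fam_close[OF Y y0 bY D0 t t' s s'])
  have sym: "DD (Fam Y y0 t' s') (Fam Y y0 t s) = DD (Fam Y y0 t s) (Fam Y y0 t' s')"
    using DD_sym cF t t' s s' by metis
  have "H t s \<le> H t' s' + DD (Fam Y y0 t' s') (Fam Y y0 t s)"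
    unfolding H_def by (rule DD_triangle[OF cG cF[OF t' s'] cF[OF t s]])
  moreover have "H t' s' \<le> H t s + DD (Fam Y y0 t s) (Fam Y y0 t' s')"
    unfolding H_def by (rule DD_triangle[OF cG cF[OF t s] cF[OF t' s']])
  ultimately show ?thesis using cl sym by (simp add: abs_le_iff) 
qed

lemma H_mono:
  assumes t: "0 \<le> t" "t \<le> 1" and s: "s > 0" and k: "k \<ge> 1" and big: "H t s > d"
  shows "k * H t s \<le> H t (k * s)"
proof -
  have ks: "k * s > 0" using s k by simp
  show ?thesis unfolding H_def
  proof (rule DD_scale[OF cG cF[OF t s] cF[OF t ks] _ _ k bG])
    show "mspace (Fam Y y0 t (k * s)) = mspace (Fam Y y0 t s)"
      using Fam_space(1)[OF y0 t s] Fam_space(1)[OF y0 t ks] by simp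
    fix a b assume "a \<in> mspace (Fam Y y0 t s)" "b \<in> mspace (Fam Y y0 t s)"
    show "mdist (Fam Y y0 t (k * s)) a b = k * mdist (Fam Y y0 t s) a b"
      using Fam_space(2)[OF y0 t s] Fam_space(2)[OF y0 t ks] by simp
  next
    show "DD G (Fam Y y0 t s) > d" using big unfolding H_def .
  qed
qed

lemma H_up:
  assumes t: "0 \<le> t" "t \<le> 1" and s: "s > 0"
  shows "H t s \<le> d + s * (D + 1)"
proof -
  have "bnd (Fam Y y0 t s) (s * (D + 1))"
    unfolding bnd_def Fam_space[OF y0 t s]
    using mt_le[OF bY D0 y0 t] s by (simp add: mult_left_mono)
  then show ?thesis unfolding H_def using DD_upper_bnd[OF cG cF[OF t s] bG] by blast
qed

lemma other_point: "\<exists>y1\<in>mspace Y. y1 \<noteq> y0"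
proof (rule ccontr)
  assume "\<not> ?thesis"
  then have M: "mspace Y = {y0}" using y0 by blast
  have z: "mdist Y y0 y0 = 0" using y0 by simp
  have "bnd Y 0" unfolding bnd_def M using z by simp
  then have "DD G Y \<le> d + 0" using DD_upper_bnd[OF cG cY bG] by blast
  then show False using Yr rd d0 by linarith
qed

lemma H_low:
  assumes t: "0 \<le> t" "t \<le> 1"
  obtains c where "c > 0" "\<And>s. s > 0 \<Longrightarrow> s * c - d \<le> H t s"
proof (cases "t = 0")
  case True
  obtain y1 where y1: "y1 \<in> mspace Y" "y1 \<noteq> y0" using other_point by blast
  have c: "mdist Y y0 y1 > 0" using y0 y1 by (simp add: order_less_le)
  have "s * mdist Y y0 y1 - d \<le> H t s" if s: "s > 0" for s
  proof -
    have "(y0, False) \<in> Cset Y y0 t" "(y1, False) \<in> Cset Y y0 t"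
      using True y0 y1 unfolding Cset_def gmap_def by (force simp: image_iff)+
    then have "mdist (Fam Y y0 t s) (y0, False) (y1, False) - d \<le> H t s"
      unfolding H_def using DD_lower_pt[OF cG cF[OF t s] bG] Fam_space(1)[OF y0 t s] by simp
    then show ?thesis using Fam_space(2)[OF y0 t s] True by (simp add: mt_def)
  qed
  then show ?thesis using that c by blast
next
  case False
  then have tp: "t > 0" using t by simp
  have "s * t - d \<le> H t s" if s: "s > 0" for s
  proof -
    have "gmap y0 t (y0, False) \<in> Cset Y y0 t" "gmap y0 t (y0, True) \<in> Cset Y y0 t"
      using y0 unfolding Cset_def by auto
    moreover have "gmap y0 t (y0, False) = (y0, False)" "gmap y0 t (y0, True) = (y0, True)"
      using False unfolding gmap_def by simp_all
    ultimately have m: "(y0, False) \<in> Cset Y y0 t" "(y0, True) \<in> Cset Y y0 t" by simp_all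
    then have "mdist (Fam Y y0 t s) (y0, False) (y0, True) - d \<le> H t s"
      unfolding H_def using DD_lower_pt[OF cG cF[OF t s] bG] Fam_space(1)[OF y0 t s] by simp
    moreover have "mdist Y y0 y0 = 0" using y0 by simp
    ultimately show ?thesis using Fam_space(2)[OF y0 t s] by (simp add: mt_def)
  qed
  then show ?thesis using that tp by blast
qed

lemma H_cont_s:
  assumes t: "0 \<le> t" "t \<le> 1" and a: "a > 0"
  shows "continuous_on {a..b} (H t)"
  unfolding continuous_on_iff
proof (intro ballI allI impI)
  fix x e assume x: "x \<in> {a..b}" and e: "(0::real) < e"
  show "\<exists>d>0. \<forall>x'\<in>{a..b}. dist x' x < d \<longrightarrow> dist (H t x') (H t x) < e"
  proof (intro exI[of _ "e / (D + 1)"] conjI ballI impI)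
    show "e / (D + 1) > 0" using e D0 by simp
    fix x' assume x': "x' \<in> {a..b}" and dx: "dist x' x < e / (D + 1)"
    have "\<bar>H t x' - H t x\<bar> \<le> (D + 1) * (\<bar>x' - x\<bar> + x * \<bar>t - t\<bar>)"
      using H_lip[OF t t] x x' a by simp
    also have "\<dots> = (D + 1) * \<bar>x' - x\<bar>" by simp
    also have "\<dots> < (D + 1) * (e / (D + 1))"
      using dx D0 by (intro mult_strict_left_mono) (auto simp: dist_real_def)
    also have "\<dots> = e" using D0 by simp
    finally show "dist (H t x') (H t x) < e" by (simp add: dist_real_def)
  qed
qed

lemma H_exists:
  assumes t: "0 \<le> t" "t \<le> 1"
  shows "\<exists>s>0. H t s = 2 * r"
proof -
  obtain c where c: "c > 0" "\<And>s. s > 0 \<Longrightarrow> s * c - d \<le> H t s" using H_low[OF t] by blast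
  define a where "a = (2 * r - d) / (2 * (D + 1))"
  have a: "a > 0" unfolding a_def using rd d0 D0 by simp
  have Ha: "H t a \<le> 2 * r"
  proof -
    have "H t a \<le> d + a * (D + 1)" by (rule H_up[OF t a])
    moreover have "2 * (a * (D + 1)) = 2 * r - d" unfolding a_def using D0 by (simp add: field_simps)
    ultimately show ?thesis using rd d0 by linarith
  qed
  define b where "b = max a ((2 * r + d) / c)"
  have ab: "a \<le> b" unfolding b_def by simp
  have b: "b > 0" using a ab by linarith
  have "b * c \<ge> ((2 * r + d) / c) * c" unfolding b_def using c(1) by (intro mult_right_mono) auto
  then have "b * c \<ge> 2 * r + d" using c(1) by simp
  then have Hb: "2 * r \<le> H t b" using c(2)[OF b] by linarith
  obtain s where s: "a \<le> s" "s \<le> b" "H t s = 2 * r"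
    using IVT'[of "H t" a "2*r" b, OF Ha Hb ab H_cont_s[OF t a]] by blast
  then show ?thesis using a by (intro exI[of _ s]) auto
qed

lemma H_unique:
  assumes t: "0 \<le> t" "t \<le> 1" and s1: "s1 > 0" "H t s1 = 2 * r" and s2: "s2 > 0" "H t s2 = 2 * r"
  shows "s1 = s2"
proof (rule ccontr)
  assume ne: "s1 \<noteq> s2"
  have *: False if "u > 0" "v > 0" "u < v" "H t u = 2 * r" "H t v = 2 * r" for u v
  proof -
    have k: "v / u \<ge> 1" using that by simp
    have "v / u * H t u \<le> H t (v / u * u)"
      by (rule H_mono[OF t that(1) k]) (use that rd d0 in linarith)
    then have "v / u * (2 * r) \<le> 2 * r" using that by simp
    moreover have "v / u > 1" using that by simp
    ultimately show False using r0 by (smt (verit) mult_less_cancel_right1)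
  qed
  show False
  proof (cases "s1 < s2")
    case True then show ?thesis using * s1 s2 by blast
  next
    case False then have "s2 < s1" using ne by simp
    then show ?thesis using * s1 s2 by blast
  qed
qed

definition lam where "lam t = (THE s. s > 0 \<and> H t s = 2 * r)"

lemma lam:
  assumes t: "0 \<le> t" "t \<le> 1"
  shows "lam t > 0" "H t (lam t) = 2 * r"
proof -
  obtain s where s: "s > 0" "H t s = 2 * r" using H_exists[OF t] by blast
  have "lam t = s" unfolding lam_def
    by (rule the_equality) (use s H_unique[OF t] in auto)
  then show "lam t > 0" "H t (lam t) = 2 * r" using s by auto
qed

lemma lam_eqI:
  assumes t: "0 \<le> t" "t \<le> 1" and "s > 0" "H t s = 2 * r"
  shows "lam t = s"
  using H_unique[OF t lam[OF t] assms(3,4)] .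

end




definition hb :: "real \<times> bool \<Rightarrow> real" where
  "hb p = arctan (fst p) + (if snd p then 4 else 0)"

lemma inj_hb: "inj hb"
proof (rule injI)
  fix p q assume e: "hb p = hb q"
  have b: "\<bar>arctan z\<bar> < 2" for z using arctan_bounded[of z] pi_less_4 by (simp add: abs_less_iff)
  have "snd p = snd q"
  proof (rule ccontr)
    assume "snd p \<noteq> snd q"
    then show False using e b[of "fst p"] b[of "fst q"] unfolding hb_def
      by (cases "snd p"; cases "snd q") (simp_all add: abs_less_iff)
  qed
  moreover then have "arctan (fst p) = arctan (fst q)" using e unfolding hb_def by simp
  then have "fst p = fst q" by (simp add: arctan_eq_iff)
  ultimately show "p = q" by (simp add: prod_eq_iff)
qed

lemma inj_on_hb: "inj_on hb A" by (rule inj_on_subset[OF inj_hb]) simp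

context sph
begin

lemma lam_cont:
  assumes t0: "0 \<le> t0" "t0 \<le> 1" and e: "e > 0"
  shows "\<exists>\<delta>>0. \<forall>t\<in>{0..1}. \<bar>t - t0\<bar> < \<delta> \<longrightarrow> \<bar>lam t - lam t0\<bar> < e"
proof -
  define l0 where "l0 = lam t0"
  have l0: "l0 > 0" "H t0 l0 = 2 * r" using lam[OF t0] unfolding l0_def by auto
  define e' where "e' = min e (l0 / 2)"
  have e': "e' > 0" "e' \<le> e" "e' \<le> l0 / 2" using e l0 unfolding e'_def by auto
  define sp where "sp = l0 + e'"
  define sm where "sm = l0 - e'"
  have sp: "sp > 0" "sp > l0" using l0 e' unfolding sp_def by auto
  have sm: "sm > 0" "sm < l0" "sm < sp" using l0 e' unfolding sm_def sp_def by auto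
  have Hsp: "H t0 sp > 2 * r"
  proof -
    have k: "sp / l0 \<ge> 1" using sp l0 by simp
    have "sp / l0 * H t0 l0 \<le> H t0 (sp / l0 * l0)"
      by (rule H_mono[OF t0 l0(1) k]) (use l0 rd d0 in linarith)
    then have "sp / l0 * (2 * r) \<le> H t0 sp" using l0 by simp
    moreover have "sp / l0 > 1" using sp l0 by simp
    ultimately show ?thesis using r0 by (smt (verit) mult_less_cancel_right1)
  qed
  have Hsm: "H t0 sm < 2 * r"
  proof (cases "H t0 sm > d")
    case True
    have k: "l0 / sm \<ge> 1" using sm l0 by simp
    have "l0 / sm * H t0 sm \<le> H t0 (l0 / sm * sm)"
      by (rule H_mono[OF t0 sm(1) k True])
    then have "l0 / sm * H t0 sm \<le> 2 * r" using sm l0 by simp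
    moreover have "l0 / sm > 1" using sm l0 by simp
    moreover have "H t0 sm > 0" using True d0 by linarith
    ultimately show ?thesis by (smt (verit) mult_less_cancel_right1)
  next
    case False then show ?thesis using rd d0 by linarith
  qed
  define g where "g = min (H t0 sp - 2 * r) (2 * r - H t0 sm)"
  have g: "g > 0" "g \<le> H t0 sp - 2 * r" "g \<le> 2 * r - H t0 sm" using Hsp Hsm unfolding g_def by auto
  define \<delta> where "\<delta> = g / ((D + 1) * sp + 1)"
  have den: "(D + 1) * sp + 1 > 0" using D0 sp by (simp add: add_pos_nonneg)
  have \<delta>: "\<delta> > 0" unfolding \<delta>_def using g den by simp
  have key: "(D + 1) * sp * \<delta> < g"
  proof -
    have "(D + 1) * sp * \<delta> = g * ((D + 1) * sp) / ((D + 1) * sp + 1)" unfolding \<delta>_def by simp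
    also have "\<dots> < g" using g den by (simp add: divide_less_eq)
    finally show ?thesis .
  qed
  show ?thesis
  proof (intro exI[of _ \<delta>] conjI ballI impI \<delta>)
    fix t assume t01: "t \<in> {0..1}" and dt: "\<bar>t - t0\<bar> < \<delta>"
    then have t: "0 \<le> t" "t \<le> 1" by auto
    have close: "\<bar>H t s - H t0 s\<bar> < g" if s: "s > 0" "s \<le> sp" for s
    proof -
      have "\<bar>H t s - H t0 s\<bar> \<le> (D + 1) * (\<bar>s - s\<bar> + s * \<bar>t - t0\<bar>)" by (rule H_lip[OF t t0 s(1) s(1)])
      also have "\<dots> = (D + 1) * s * \<bar>t - t0\<bar>" by simp
      also have "\<dots> \<le> (D + 1) * sp * \<delta>"
        using s D0 dt by (intro mult_mono) (auto intro: mult_left_mono)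
      finally show ?thesis using key by linarith
    qed
    have A: "H t sp > 2 * r" using close[OF sp(1) order_refl] g by linarith
    have B: "H t sm < 2 * r" using close[OF sm(1) less_imp_le[OF sm(3)]] g by linarith
    have lt: "lam t > 0" "H t (lam t) = 2 * r" using lam[OF t] by auto
    have up: "lam t < sp"
    proof (rule ccontr)
      assume "\<not> lam t < sp"
      then have k: "lam t / sp \<ge> 1" using sp by simp
      have "lam t / sp * H t sp \<le> H t (lam t / sp * sp)"
        by (rule H_mono[OF t sp(1) k]) (use A rd d0 in linarith)
      then have "lam t / sp * H t sp \<le> 2 * r" using sp lt by simp
      moreover have "1 * H t sp \<le> lam t / sp * H t sp"
        by (rule mult_right_mono[OF k]) (use A r0 in linarith)
      ultimately show False using A by linarith
    qed
    have lo: "lam t > sm"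
    proof (rule ccontr)
      assume "\<not> lam t > sm"
      then have k: "sm / lam t \<ge> 1" using lt by simp
      have "sm / lam t * H t (lam t) \<le> H t (sm / lam t * lam t)"
        by (rule H_mono[OF t lt(1) k]) (use lt rd d0 in linarith)
      then have "sm / lam t * (2 * r) \<le> H t sm" using lt by simp
      moreover have "1 * (2 * r) \<le> sm / lam t * (2 * r)"
        by (rule mult_right_mono[OF k]) (use r0 in linarith)
      ultimately show False using B by linarith
    qed
    show "\<bar>lam t - lam t0\<bar> < e" using up lo e' unfolding sp_def sm_def l0_def by linarith
  qed
qed

definition Gam where "Gam t = iso_class (push hb (Fam Y y0 t (lam t)))"

lemma Fcomp: "0 \<le> t \<Longrightarrow> t \<le> 1 \<Longrightarrow> compact_ms (Fam Y y0 t (lam t))"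
  using Fam_compact[OF Y y0 _ _ lam(1)] by blast

lemma Gam_in: "0 \<le> t \<Longrightarrow> t \<le> 1 \<Longrightarrow> Gam t \<in> GH_space"
  unfolding Gam_def using class_in_push[OF Fcomp inj_on_hb] .

lemma rep_Gam: "0 \<le> t \<Longrightarrow> t \<le> 1 \<Longrightarrow> isometric_ms (Fam Y y0 t (lam t)) (rep (Gam t))"
  unfolding Gam_def using isometric_trans[OF push_isometric[OF inj_on_hb] rep_class] .

lemma rep_Gam_c: "0 \<le> t \<Longrightarrow> t \<le> 1 \<Longrightarrow> cms (rep (Gam t))"
  using rep_facts(2)[OF Gam_in] compact_ms_cms by blast

lemma Gam_sphere:
  assumes t: "0 \<le> t" "t \<le> 1"
  shows "DD G (rep (Gam t)) = 2 * r"
proof -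
  have "DD G (Fam Y y0 t (lam t)) = DD G (rep (Gam t))"
    by (rule DD_iso_right[OF cG cF[OF t lam(1)[OF t]] rep_Gam_c[OF t] rep_Gam[OF t]])
  then show ?thesis using lam(2)[OF t] unfolding H_def by simp
qed

lemma Gam_dist:
  assumes t: "0 \<le> t" "t \<le> 1" and t': "0 \<le> t'" "t' \<le> 1"
  shows "dGH_M (Gam t) (Gam t') \<le> (D + 1) * (\<bar>lam t - lam t'\<bar> + lam t' * \<bar>t - t'\<bar>) / 2"
proof -
  have "dGH_M (Gam t) (Gam t') = DD (Fam Y y0 t (lam t)) (rep (Gam t')) / 2"
    unfolding Gam_def[of t] by (rule dGH_M_class[OF Fcomp[OF t] inj_on_hb Gam_in[OF t']])
  also have "DD (Fam Y y0 t (lam t)) (rep (Gam t')) = DD (Fam Y y0 t (lam t)) (Fam Y y0 t' (lam t'))"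
    using DD_iso_right[OF cF[OF t lam(1)[OF t]] cF[OF t' lam(1)[OF t']] rep_Gam_c[OF t'] rep_Gam[OF t']] by simp
  also have "\<dots> \<le> (D + 1) * (\<bar>lam t - lam t'\<bar> + lam t' * \<bar>t - t'\<bar>)"
    by (rule Fam_close[OF Y y0 bY D0 t t' lam(1)[OF t] lam(1)[OF t']])
  finally show ?thesis by simp
qed

lemma Gam_path: "pathin GH_topology Gam"
proof (rule pathin_GH)
  fix t :: real assume "t \<in> {0..1}" then show "Gam t \<in> GH_space" using Gam_in by auto
next
  fix t e :: real assume t01: "t \<in> {0..1}" and e: "e > 0"
  then have t: "0 \<le> t" "t \<le> 1" by auto
  define \<eta> where "\<eta> = min 1 (e / (D + 1))"
  have \<eta>: "\<eta> > 0" "\<eta> \<le> 1" "\<eta> \<le> e / (D + 1)" using e D0 unfolding \<eta>_def by auto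
  obtain \<delta>1 where \<delta>1: "\<delta>1 > 0" "\<forall>t'\<in>{0..1}. \<bar>t' - t\<bar> < \<delta>1 \<longrightarrow> \<bar>lam t' - lam t\<bar> < \<eta>"
    using lam_cont[OF t \<eta>(1)] by blast
  have lt: "lam t > 0" using lam[OF t] by simp
  define \<delta> where "\<delta> = min \<delta>1 (\<eta> / (lam t + 2))"
  have \<delta>: "\<delta> > 0" "\<delta> \<le> \<delta>1" "\<delta> \<le> \<eta> / (lam t + 2)" using \<delta>1 \<eta> lt unfolding \<delta>_def by auto
  show "\<exists>d>0. \<forall>t'\<in>{0..1}. \<bar>t' - t\<bar> < d \<longrightarrow> dGH_M (Gam t) (Gam t') < e"
  proof (intro exI[of _ \<delta>] conjI ballI impI \<delta>(1))
    fix t' assume t'01: "t' \<in> {0..1}" and dt: "\<bar>t' - t\<bar> < \<delta>"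
    then have t': "0 \<le> t'" "t' \<le> 1" by auto
    have dl: "\<bar>lam t' - lam t\<bar> < \<eta>" using \<delta>1(2) t'01 dt \<delta>(2) by auto
    have l': "0 < lam t'" "lam t' \<le> lam t + 1" using lam[OF t'] dl \<eta> by auto
    have "lam t' * \<bar>t - t'\<bar> \<le> (lam t + 2) * \<delta>"
      using l' dt lt by (intro mult_mono) (auto simp: abs_minus_commute)
    also have "\<dots> \<le> (lam t + 2) * (\<eta> / (lam t + 2))" using \<delta> lt by (intro mult_left_mono) auto
    also have "\<dots> = \<eta>" using lt by simp
    finally have p2: "lam t' * \<bar>t - t'\<bar> \<le> \<eta>" .
    have "\<bar>lam t - lam t'\<bar> + lam t' * \<bar>t - t'\<bar> < 2 * \<eta>" using dl p2 by (simp add: abs_minus_commute)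
    then have "(D + 1) * (\<bar>lam t - lam t'\<bar> + lam t' * \<bar>t - t'\<bar>) < (D + 1) * (2 * \<eta>)"
      using D0 by (intro mult_strict_left_mono) auto
    also have "(D + 1) * (2 * \<eta>) \<le> 2 * e"
    proof -
      have "(D + 1) * \<eta> \<le> (D + 1) * (e / (D + 1))" using \<eta> D0 by (intro mult_left_mono) auto
      then show ?thesis using D0 by simp
    qed
    finally show "dGH_M (Gam t) (Gam t') < e" using Gam_dist[OF t t'] by linarith
  qed
qed

lemma Fam0_iso: "isometric_ms Y (Fam Y y0 0 1)"
proof -
  have sp: "mspace (Fam Y y0 0 1) = Cset Y y0 0" "mdist (Fam Y y0 0 1) = (\<lambda>p q. 1 * mt Y 0 p q)"
    using Fam_space[OF y0, of 0 1] by auto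
  have im: "(\<lambda>y. (y, False)) ` mspace Y = Cset Y y0 0"
    unfolding Cset_def gmap_def by (auto simp: image_iff)
  show ?thesis unfolding isometric_ms_def isometric_embedding_def sp
    using im by (intro exI[of _ "\<lambda>y. (y, False)"]) (auto simp: mt_def)
qed

lemma lam0: "lam 0 = 1"
proof (rule lam_eqI)
  have "DD G Y = DD G (Fam Y y0 0 1)"
    by (rule DD_iso_right[OF cG cY cF Fam0_iso]) auto
  then show "H 0 1 = 2 * r" unfolding H_def using Yr by simp
qed auto

lemma Gam0: "Gam 0 = iso_class Y"
  unfolding Gam_def lam0
  using iso_class_eq[OF isometric_trans[OF Fam0_iso push_isometric[OF inj_on_hb]]] by simp

end




context sph
begin

definition Sph where "Sph = {W \<in> GH_space. DD G (rep W) = 2 * r}"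

lemma spoke: "path_component_of (subtopology GH_topology Sph) (iso_class Y) (Gam 1)"
  unfolding path_component_of_set
proof (intro exI[of _ Gam] conjI)
  show "pathin (subtopology GH_topology Sph) Gam"
    unfolding pathin_subtopology
    using Gam_path Gam_in Gam_sphere unfolding Sph_def by auto
  show "Gam 0 = iso_class Y" by (rule Gam0)
qed simp

end

lemma Fam1_iso:
  assumes y1: "y1 \<in> mspace Y1" and y2: "y2 \<in> mspace Y2" and s: "s > 0"
  shows "isometric_ms (Fam Y1 y1 1 s) (Fam Y2 y2 1 s)"
proof -
  have sp1: "mspace (Fam Y1 y1 1 s) = Cset Y1 y1 1" "mdist (Fam Y1 y1 1 s) = (\<lambda>p q. s * mt Y1 1 p q)"
    using Fam_space[OF y1, of 1 s] s by auto
  have sp2: "mspace (Fam Y2 y2 1 s) = Cset Y2 y2 1" "mdist (Fam Y2 y2 1 s) = (\<lambda>p q. s * mt Y2 1 p q)"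
    using Fam_space[OF y2, of 1 s] s by auto
  have C1: "Cset Y1 y1 1 = {(y1, b) | b. True}"
  proof
    show "Cset Y1 y1 1 \<subseteq> {(y1, b) | b. True}" unfolding Cset_def gmap_def by auto
    show "{(y1, b) | b. True} \<subseteq> Cset Y1 y1 1"
    proof
      fix p :: "real \<times> bool" assume "p \<in> {(y1, b) | b. True}"
      then obtain b :: bool where pb: "p = (y1, b)" by blast
      have "(y1, b) = gmap y1 1 (y1, b)" unfolding gmap_def by simp
      moreover have "(y1, b) \<in> mspace Y1 \<times> UNIV" using y1 by simp
      ultimately show "p \<in> Cset Y1 y1 1" unfolding Cset_def pb by blast
    qed
  qed
  have C2: "Cset Y2 y2 1 = {(y2, b) | b. True}"
  proof
    show "Cset Y2 y2 1 \<subseteq> {(y2, b) | b. True}" unfolding Cset_def gmap_def by auto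
    show "{(y2, b) | b. True} \<subseteq> Cset Y2 y2 1"
    proof
      fix p :: "real \<times> bool" assume "p \<in> {(y2, b) | b. True}"
      then obtain b :: bool where pb: "p = (y2, b)" by blast
      have "(y2, b) = gmap y2 1 (y2, b)" unfolding gmap_def by simp
      moreover have "(y2, b) \<in> mspace Y2 \<times> UNIV" using y2 by simp
      ultimately show "p \<in> Cset Y2 y2 1" unfolding Cset_def pb by blast
    qed
  qed
  define f where "f = (\<lambda>p::real\<times>bool. (y2, snd p))"
  have im: "f ` Cset Y1 y1 1 = Cset Y2 y2 1"
  proof
    show "f ` Cset Y1 y1 1 \<subseteq> Cset Y2 y2 1" unfolding C1 C2 f_def by auto
    show "Cset Y2 y2 1 \<subseteq> f ` Cset Y1 y1 1"
    proof
      fix p :: "real \<times> bool" assume "p \<in> Cset Y2 y2 1"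
      then obtain b :: bool where pb: "p = (y2, b)" unfolding C2 by blast
      have "(y1, b) \<in> Cset Y1 y1 1" unfolding C1 by blast
      moreover have "p = f (y1, b)" unfolding pb f_def by simp
      ultimately show "p \<in> f ` Cset Y1 y1 1" by blast
    qed
  qed
  have md: "mt Y2 1 (f p) (f q) = mt Y1 1 p q" for p q unfolding mt_def f_def by simp
  show ?thesis unfolding isometric_ms_def isometric_embedding_def sp1 sp2
    using im md by (intro exI[of _ f]) auto
qed

lemma ends_eq:
  assumes A: "sph G d r Y1 y1" and B: "sph G d r Y2 y2"
  shows "sph.Gam G r Y1 y1 1 = sph.Gam G r Y2 y2 1"
proof -
  interpret a: sph G d r Y1 y1 by (rule A)
  interpret b: sph G d r Y2 y2 by (rule B)
  define L where "L = a.lam 1"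
  have L: "L > 0" "a.H 1 L = 2 * r" using a.lam[of 1] unfolding L_def by auto
  have iso: "isometric_ms (Fam Y1 y1 1 L) (Fam Y2 y2 1 L)" by (rule Fam1_iso[OF a.y0 b.y0 L(1)])
  have "a.H 1 L = b.H 1 L"
    unfolding a.H_def b.H_def
    by (rule DD_iso_right[OF a.cG a.cF b.cF iso]) (use L in auto)
  then have "b.lam 1 = L" using b.lam_eqI[of 1 L] L by simp
  then have "b.Gam 1 = iso_class (push hb (Fam Y2 y2 1 L))" unfolding b.Gam_def by simp
  moreover have "a.Gam 1 = iso_class (push hb (Fam Y1 y1 1 L))" unfolding a.Gam_def L_def by simp
  moreover have "isometric_ms (push hb (Fam Y1 y1 1 L)) (push hb (Fam Y2 y2 1 L))"
    using isometric_trans[OF isometric_sym[OF push_isometric[OF inj_on_hb]] isometric_trans[OF iso push_isometric[OF inj_on_hb]]] .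
  ultimately show ?thesis using iso_class_eq by metis
qed

theorem corollary3:
  fixes G :: "real metric set" and r :: real
  assumes "G \<in> GH_space" and "r > diam_M G"
  shows "path_connectedin GH_topology {Y \<in> GH_space. dGH_M G Y = r}"
proof -
  define G' where "G' = rep G"
  have G': "compact_ms G'" using rep_facts(2)[OF assms(1)] unfolding G'_def .
  define d where "d = mdiam G'"
  have bG: "bnd G' d" unfolding d_def using mdiam_bnd[OF compact_ms_cms[OF G']] .
  have rd: "r > d" using assms(2) unfolding d_def G'_def diam_M_def .
  define S where "S = {Y \<in> GH_space. dGH_M G Y = r}"
  have eq: "(dGH_M G W = r) \<longleftrightarrow> (DD G' (rep W) = 2 * r)" if W: "W \<in> GH_space" for W
  proof -
    have "dGH_M G W = DD G' (rep W) / 2" using dGH_M_rep[OF assms(1) W] unfolding G'_def .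
    then show ?thesis by linarith
  qed
  have S: "S = {W \<in> GH_space. DD G' (rep W) = 2 * r}"
    unfolding S_def using eq by blast
  have mk: "sph G' d r (rep W) (SOME y. y \<in> mspace (rep W))" if W: "W \<in> S" for W
  proof -
    have c: "compact_ms (rep W)" using rep_facts(2) W unfolding S by blast
    then have "mspace (rep W) \<noteq> {}" unfolding compact_ms_def by blast
    then have "(SOME y. y \<in> mspace (rep W)) \<in> mspace (rep W)" by (simp add: some_in_eq)
    then show ?thesis using G' bG rd c W unfolding S by unfold_locales auto
  qed
  have Sph_eq: "sph.Sph G' r = S" if W: "W \<in> S" for W
    using sph.Sph_def[OF mk[OF W]] S by simp
  have pc: "path_component_of (subtopology GH_topology S) W1 W2" if W1: "W1 \<in> S" and W2: "W2 \<in> S" for W1 W2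
  proof -
    have e1: "iso_class (rep W1) = W1" using rep_facts(3) W1 unfolding S by blast
    have e2: "iso_class (rep W2) = W2" using rep_facts(3) W2 unfolding S by blast
    have p1: "path_component_of (subtopology GH_topology S) W1 (sph.Gam G' r (rep W1) (SOME y. y \<in> mspace (rep W1)) 1)"
      using sph.spoke[OF mk[OF W1]] Sph_eq[OF W1] e1 by simp
    have p2: "path_component_of (subtopology GH_topology S) W2 (sph.Gam G' r (rep W2) (SOME y. y \<in> mspace (rep W2)) 1)"
      using sph.spoke[OF mk[OF W2]] Sph_eq[OF W2] e2 by simp
    have "sph.Gam G' r (rep W1) (SOME y. y \<in> mspace (rep W1)) 1 = sph.Gam G' r (rep W2) (SOME y. y \<in> mspace (rep W2)) 1"
      by (rule ends_eq[OF mk[OF W1] mk[OF W2]])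
    then show ?thesis using p1 p2 path_component_of_sym path_component_of_trans by metis
  qed
  have sub: "S \<subseteq> topspace GH_topology" unfolding topspace_GH S_def by blast
  have "path_connected_space (subtopology GH_topology S)"
    unfolding path_connected_space_iff_path_component using pc sub by auto
  then show ?thesis unfolding path_connectedin_def S_def[symmetric] using sub by blast
qed



end
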